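(* Assume that for every $i=1,\dots,N$, $R_i(\cdot)^{-1}$ and $(R_i(\cdot)+\bar R_i(\cdot))^{-1}$ exist and are bounded, and that there is $\delta>0$ with $D_0(s)D_0(s)^\top\ge\delta I_n$ and $\widehat D_0(s)\widehat D_0(s)^\top\ge\delta I_n$ for a.e. $s\in[0,T]$. Then: (i) If $(u_0,\theta)\in L^2_{\mathbb F}(0,T;\mathbb R^{m_0})\times\Theta$ satisfies the MF-GBCS, then, setting $$q=C(x^*-\mathbb E[x^*])+D^y_{-0}(y_{-0}-\mathbb E[y_{-0}])+D^z_{-0}(z_{-0}-\mathbb E[z_{-0}])+D_0(u_0-\mathbb E[u_0])+\widehat C\mathbb E[x^*]+\widehat D^y_{-0}\mathbb E[y_{-0}]+\widehat D^z_{-0}\mathbb E[z_{-0}]+\widehat D_0\mathbb E[u_0],\quad v=u_0,$$ the pair $(v,\pi)$ with $\pi=(y,z)$, $y=(x^{*\top},y_{-0}^\top)^\top$, $z=(q^\top,z_{-0}^\top)^\top$, belongs to $L^2_{\mathbb F}(0,T;\mathbb R^{m_0})\times\Pi$ and satisfies the backward system. (ii) If $(v,\pi)\in L^2_{\mathbb F}(0,T;\mathbb R^{m_0})\times\Pi$, $\pi=((x^{*\top},y_{-0}^\top)^\top,(q^\top,z_{-0}^\top)^\top)$, satisfies the backward system, then, setting $$u_0=D_0^\top(D_0D_0^\top)^{-1}\{(q-\mathbb E[q])-C(x^*-\mathbb E[x^*])-D^y_{-0}(y_{-0}-\mathbb E[y_{-0}])-D^z_{-0}(z_{-0}-\mathbb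 E[z_{-0}])\}+[I-D_0^\top(D_0D_0^\top)^{-1}D_0](v-\mathbb E[v])$$ $$\qquad+\widehat D_0^\top(\widehat D_0\widehat D_0^\top)^{-1}\{\mathbb E[q]-\widehat C\mathbb E[x^*]-\widehat D^y_{-0}\mathbb E[y_{-0}]-\widehat D^z_{-0}\mathbb E[z_{-0}]\}+[I-\widehat D_0^\top(\widehat D_0\widehat D_0^\top)^{-1}\widehat D_0]\mathbb E[v],$$ the pair $(u_0,\theta)$ with $\theta=(x^*,y_{-0},z_{-0})$ belongs to $L^2_{\mathbb F}(0,T;\mathbb R^{m_0})\times\Theta$ and satisfies the MF-GBCS.
   Context: Let $T>0$ and let $(\Omega,\mathcal F,\mathbb F,\mathbb P)$ be a complete filtered probability space carrying a one-dimensional standard Brownian motion $W(\cdot)$, with $\mathbb F$ the natural filtration of $W$ augmented by the $\mathbb P$-null sets. $L^2_{\mathbb F}(0,T;\mathbb R^k)$: $\mathbb F$-progressively measurable processes with $\mathbb E\int_0^T|\varphi|^2ds<\infty$; $L^2_{\mathbb F}(\Omega;C(0,T;\mathbb R^k))$: $\mathbb F$-progressively measurable continuous processes with $\mathbb E\sup_s|\varphi(s)|^2<\infty$; $L^\infty(0,T;\cdot)$: bounded measurable deterministic functions; $\mathbb S^k$: symmetric $k\times k$ matrices. Time arguments are suppressed. Let $n,N\ge1$, $m_0,\dots,m_N\ge1$, $m_{-0}=m_1+\dots+m_N$. Coefficients: $A,\bar A,C,\bar C\in L^\infty(0,T;\mathbb R^{n\times n})$; for $i=0,\dots,N$, $B_i,\bar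 B_i,D_i,\bar D_i\in L^\infty(0,T;\mathbb R^{n\times m_i})$; $B_{-0}=(B_1,\dots,B_N)$, similarly $\bar B_{-0},D_{-0},\bar D_{-0}$. For $i=1,\dots,N$: $H_i,\bar H_i\in\mathbb S^n$, $Q_i,\bar Q_i\in L^\infty(0,T;\mathbb S^n)$, $R_i,\bar R_i\in L^\infty(0,T;\mathbb S^{m_i})$. $\widetilde A,\bar{\widetilde A},\widetilde C,\bar{\widetilde C}$ are block-diagonal with $N$ copies of $A,\bar A,C,\bar C$; $\widetilde B_{-0}=\mathrm{diag}(B_1,\dots,B_N)$, $\bar{\widetilde B}_{-0}=\mathrm{diag}(\bar B_1,\dots,\bar B_N)$, $\widetilde D_{-0}=\mathrm{diag}(D_1,\dots,D_N)$, $\bar{\widetilde D}_{-0}=\mathrm{diag}(\bar D_1,\dots,\bar D_N)$; $R=\mathrm{diag}(R_1,\dots,R_N)$, $\bar R=\mathrm{diag}(\bar R_1,\dots,\bar R_N)$; $Q=(Q_1^\top,\dots,Q_N^\top)^\top$, and $\bar Q,H,\bar H$ similarly. Define $B^y_{-0}=-B_{-0}R^{-1}\widetilde B_{-0}^\top$, $\bar B^y_{-0}=B_{-0}R^{-1}\widetilde B_{-0}^\top-(B_{-0}+\bar B_{-0})(R+\bar R)^{-1}(\widetilde B_{-0}+\bar{\widetilde B}_{-0})^\top$, $B^z_{-0}=-B_{-0}R^{-1}\widetilde D_{-0}^\top$, $\bar B^z_{-0}=B_{-0}R^{-1}\widetilde D_{-0}^\top-(B_{-0}+\bar B_{-0})(R+\bar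 R)^{-1}(\widetilde D_{-0}+\bar{\widetilde D}_{-0})^\top$, and $D^y_{-0},\bar D^y_{-0},D^z_{-0},\bar D^z_{-0}$ by the same formulas with the leading $B_{-0}$, $B_{-0}+\bar B_{-0}$ replaced by $D_{-0}$, $D_{-0}+\bar D_{-0}$. Hat convention: for any matrices $M,\bar M$ of equal size, $\widehat M:=M+\bar M$ (e.g. $\widehat C=C+\bar C$, $\widehat D_0=D_0+\bar D_0$, $\widehat D^y_{-0}=D^y_{-0}+\bar D^y_{-0}$); conversely, when $M$ and $\widehat M$ are defined, $\bar M:=\widehat M-M$. $\Theta:=L^2_{\mathbb F}(\Omega;C(0,T;\mathbb R^n))\times L^2_{\mathbb F}(\Omega;C(0,T;\mathbb R^{Nn}))\times L^2_{\mathbb F}(0,T;\mathbb R^{Nn})$. The MF-GBCS is the system, for $u_0\in L^2_{\mathbb F}(0,T;\mathbb R^{m_0})$ and $\theta=(x^*,y_{-0},z_{-0})\in\Theta$: $dx^*=\{Ax^*+\bar A\mathbb E[x^*]+B^y_{-0}y_{-0}+\bar B^y_{-0}\mathbb E[y_{-0}]+B^z_{-0}z_{-0}+\bar B^z_{-0}\mathbb E[z_{-0}]+B_0u_0+\bar B_0\mathbb E[u_0]\}ds+\{Cx^*+\bar C\mathbb E[x^*]+D^y_{-0}y_{-0}+\bar D^y_{-0}\mathbb E[y_{-0}]+D^z_{-0}z_{-0}+\bar D^z_{-0}\mathbb E[z_{-0}]+D_0u_0+\bar D_0\mathbb E[u_0]\}dW$, $dy_{-0}=-\{Qx^*+\bar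 Q\mathbb E[x^*]+\widetilde A^\top y_{-0}+\bar{\widetilde A}^\top\mathbb E[y_{-0}]+\widetilde C^\top z_{-0}+\bar{\widetilde C}^\top\mathbb E[z_{-0}]\}ds+z_{-0}dW$, $y_{-0}(T)=Hx^*(T)+\bar H\mathbb E[x^*(T)]$. Backward system coefficients: $\mathbf A_1=A-B_0D_0^\top(D_0D_0^\top)^{-1}C$, $\widehat{\mathbf A}_1=\widehat A-\widehat B_0\widehat D_0^\top(\widehat D_0\widehat D_0^\top)^{-1}\widehat C$; $\mathbf A_2=B^y_{-0}-B_0D_0^\top(D_0D_0^\top)^{-1}D^y_{-0}$, $\widehat{\mathbf A}_2=\widehat B^y_{-0}-\widehat B_0\widehat D_0^\top(\widehat D_0\widehat D_0^\top)^{-1}\widehat D^y_{-0}$; $\mathbf C_1=B_0D_0^\top(D_0D_0^\top)^{-1}$, $\widehat{\mathbf C}_1=\widehat B_0\widehat D_0^\top(\widehat D_0\widehat D_0^\top)^{-1}$; $\mathbf C_2=B^z_{-0}-B_0D_0^\top(D_0D_0^\top)^{-1}D^z_{-0}$, $\widehat{\mathbf C}_2=\widehat B^z_{-0}-\widehat B_0\widehat D_0^\top(\widehat D_0\widehat D_0^\top)^{-1}\widehat D^z_{-0}$; $\mathbf B_1=B_0[I-D_0^\top(D_0D_0^\top)^{-1}D_0]$, $\widehat{\mathbf B}_1=\widehat B_0[I-\widehat D_0^\top(\widehat D_0\widehat D_0^\top)^{-1}\widehat D_0]$; bars by $\bar{\mathbf A}_1=\widehat{\mathbf A}_1-\mathbf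 A_1$ etc. Then $\mathbf A=\begin{pmatrix}\mathbf A_1&\mathbf A_2\\-Q&-\widetilde A^\top\end{pmatrix}$, $\mathbf C=\begin{pmatrix}\mathbf C_1&\mathbf C_2\\0&-\widetilde C^\top\end{pmatrix}$, $\mathbf B=\begin{pmatrix}\mathbf B_1\\0\end{pmatrix}$, $\bar{\mathbf A}=\begin{pmatrix}\bar{\mathbf A}_1&\bar{\mathbf A}_2\\-\bar Q&-\bar{\widetilde A}^\top\end{pmatrix}$, $\bar{\mathbf C}=\begin{pmatrix}\bar{\mathbf C}_1&\bar{\mathbf C}_2\\0&-\bar{\widetilde C}^\top\end{pmatrix}$, $\bar{\mathbf B}=\begin{pmatrix}\bar{\mathbf B}_1\\0\end{pmatrix}$. $\Pi:=L^2_{\mathbb F}(\Omega;C(0,T;\mathbb R^{(1+N)n}))\times L^2_{\mathbb F}(0,T;\mathbb R^{(1+N)n})$. The backward system, for $v\in L^2_{\mathbb F}(0,T;\mathbb R^{m_0})$ and $\pi=(y,z)\in\Pi$ with $y=(x^{*\top},y_{-0}^\top)^\top$, $z=(q^\top,z_{-0}^\top)^\top$ ($x^*,q$ $\mathbb R^n$-valued, $y_{-0},z_{-0}$ $\mathbb R^{Nn}$-valued), is $dy=\{\mathbf Ay+\bar{\mathbf A}\mathbb E[y]+\mathbf Cz+\bar{\mathbf C}\mathbb E[z]+\mathbf Bv+\bar{\mathbf B}\mathbb E[v]\}ds+z\,dW$, $s\in[0,T]$, $y_{-0}(T)=Hx^*(T)+\bar H\mathbb E[x^*(T)]$. *)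

theory Defs
  imports "HOL-Probability.Probability"
begin

definition brownian :: "'a measure \<Rightarrow> (real \<Rightarrow> 'a \<Rightarrow> real) \<Rightarrow> bool" where
  "brownian M W \<longleftrightarrow> prob_space M \<and>
     (\<forall>t. W t \<in> borel_measurable M) \<and>
     (\<forall>\<omega>\<in>space M. W 0 \<omega> = 0 \<and> continuous_on {0..} (\<lambda>t. W t \<omega>)) \<and>
     (\<forall>s t. 0 \<le> s \<and> s < t \<longrightarrow>
        distributed M lborel (\<lambda>\<omega>. W t \<omega> - W s \<omega>)
          (\<lambda>x. ennreal (normal_density 0 (sqrt (t - s)) x))) \<and>
     (\<forall>(k::nat) (tp::nat \<Rightarrow> real). tp 0 = 0 \<and> (\<forall>j<k. tp j < tp (Suc j)) \<longrightarrow>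
        prob_space.indep_vars M (\<lambda>_. borel) (\<lambda>j \<omega>. W (tp (Suc j)) \<omega> - W (tp j) \<omega>) {..<k})"

definition Fnat :: "'a measure \<Rightarrow> (real \<Rightarrow> 'a \<Rightarrow> real) \<Rightarrow> real \<Rightarrow> 'a measure" where
  "Fnat M W t = sigma (space M)
     ((\<Union>s\<in>{0..t}. {W s -` B \<inter> space M | B. B \<in> sets borel}) \<union> null_sets M)"

definition progressive :: "'a measure \<Rightarrow> (real \<Rightarrow> 'a measure) \<Rightarrow> real
    \<Rightarrow> (real \<Rightarrow> 'a \<Rightarrow> 'v::euclidean_space) \<Rightarrow> bool" where
  "progressive M F T \<phi> \<longleftrightarrow> (\<forall>t\<in>{0..T}.
     (\<lambda>(s,\<omega>). \<phi> s \<omega>) \<in> borel_measurable (restrict_space borel {0..t} \<Otimes>\<^sub>M F t))"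

definition L2F :: "'a measure \<Rightarrow> (real \<Rightarrow> 'a measure) \<Rightarrow> real
    \<Rightarrow> (real \<Rightarrow> 'a \<Rightarrow> 'v::euclidean_space) \<Rightarrow> bool" where
  "L2F M F T \<phi> \<longleftrightarrow> progressive M F T \<phi> \<and>
     (\<integral>\<^sup>+\<omega>. (\<integral>\<^sup>+s. ennreal ((norm (\<phi> s \<omega>))\<^sup>2) * indicator {0..T} s \<partial>lborel) \<partial>M) < \<infinity>"

definition L2FC :: "'a measure \<Rightarrow> (real \<Rightarrow> 'a measure) \<Rightarrow> real
    \<Rightarrow> (real \<Rightarrow> 'a \<Rightarrow> 'v::euclidean_space) \<Rightarrow> bool" where
  "L2FC M F T \<phi> \<longleftrightarrow> progressive M F T \<phi> \<and>
     (\<forall>\<omega>\<in>space M. continuous_on {0..T} (\<lambda>s. \<phi> s \<omega>)) \<and>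
     (\<integral>\<^sup>+\<omega>. (SUP s\<in>{0..T}. ennreal ((norm (\<phi> s \<omega>))\<^sup>2)) \<partial>M) < \<infinity>"

definition simp_ok :: "'a measure \<Rightarrow> (real \<Rightarrow> 'a measure) \<Rightarrow> real \<Rightarrow> nat
    \<Rightarrow> (nat \<Rightarrow> real) \<Rightarrow> (nat \<Rightarrow> 'a \<Rightarrow> real) \<Rightarrow> bool" where
  "simp_ok M F T K tp \<xi> \<longleftrightarrow> tp 0 = 0 \<and> tp K = T \<and> (\<forall>j<K. tp j < tp (Suc j)) \<and>
     (\<forall>j<K. \<xi> j \<in> borel_measurable (F (tp j)) \<and> integrable M (\<lambda>\<omega>. (\<xi> j \<omega>)\<^sup>2))"

definition simp_proc :: "nat \<Rightarrow> (nat \<Rightarrow> real) \<Rightarrow> (nat \<Rightarrow> 'a \<Rightarrow> real) \<Rightarrow> real \<Rightarrow> 'a \<Rightarrow> real" where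
  "simp_proc K tp \<xi> = (\<lambda>s \<omega>. \<Sum>j<K. \<xi> j \<omega> * indicator {tp j<..tp (Suc j)} s)"

definition simp_int :: "(real \<Rightarrow> 'a \<Rightarrow> real) \<Rightarrow> nat \<Rightarrow> (nat \<Rightarrow> real) \<Rightarrow> (nat \<Rightarrow> 'a \<Rightarrow> real)
    \<Rightarrow> real \<Rightarrow> 'a \<Rightarrow> real" where
  "simp_int W K tp \<xi> t = (\<lambda>\<omega>. \<Sum>j<K. \<xi> j \<omega> * (W (min t (tp (Suc j))) \<omega> - W (min t (tp j)) \<omega>))"

definition ito_int :: "'a measure \<Rightarrow> (real \<Rightarrow> 'a measure) \<Rightarrow> (real \<Rightarrow> 'a \<Rightarrow> real) \<Rightarrow> real
    \<Rightarrow> (real \<Rightarrow> 'a \<Rightarrow> real) \<Rightarrow> real \<Rightarrow> ('a \<Rightarrow> real) \<Rightarrow> bool" where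
  "ito_int M F W T \<sigma> t Y \<longleftrightarrow> Y \<in> borel_measurable M \<and>
     (\<exists>(K::nat \<Rightarrow> nat) (tp::nat \<Rightarrow> nat \<Rightarrow> real) (\<xi>::nat \<Rightarrow> nat \<Rightarrow> 'a \<Rightarrow> real).
        (\<forall>k. simp_ok M F T (K k) (tp k) (\<xi> k)) \<and>
        ((\<lambda>k. \<integral>\<^sup>+\<omega>. (\<integral>\<^sup>+s. ennreal ((\<sigma> s \<omega> - simp_proc (K k) (tp k) (\<xi> k) s \<omega>)\<^sup>2)
                 * indicator {0..T} s \<partial>lborel) \<partial>M) \<longlonglongrightarrow> 0) \<and>
        ((\<lambda>k. \<integral>\<^sup>+\<omega>. ennreal ((Y \<omega> - simp_int W (K k) (tp k) (\<xi> k) t \<omega>)\<^sup>2) \<partial>M) \<longlonglongrightarrow> 0))"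

definition vito :: "'a measure \<Rightarrow> (real \<Rightarrow> 'a measure) \<Rightarrow> (real \<Rightarrow> 'a \<Rightarrow> real) \<Rightarrow> real
    \<Rightarrow> (real \<Rightarrow> 'a \<Rightarrow> real^'d) \<Rightarrow> real \<Rightarrow> ('a \<Rightarrow> real^'d) \<Rightarrow> bool" where
  "vito M F W T \<sigma> t Y \<longleftrightarrow> (\<forall>i. ito_int M F W T (\<lambda>s \<omega>. \<sigma> s \<omega> $ i) t (\<lambda>\<omega>. Y \<omega> $ i))"

definition sde :: "'a measure \<Rightarrow> (real \<Rightarrow> 'a \<Rightarrow> real) \<Rightarrow> real \<Rightarrow> (real \<Rightarrow> 'a \<Rightarrow> real^'d)
    \<Rightarrow> (real \<Rightarrow> 'a \<Rightarrow> real^'d) \<Rightarrow> (real \<Rightarrow> 'a \<Rightarrow> real^'d) \<Rightarrow> bool" where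
  "sde M W T X b \<sigma> \<longleftrightarrow> (\<forall>t\<in>{0..T}.
     (AE \<omega> in M. set_integrable lborel {0..t} (\<lambda>s. b s \<omega>)) \<and>
     (\<exists>Y. vito M (Fnat M W) W T \<sigma> t Y \<and>
        (AE \<omega> in M. X t \<omega> = X 0 \<omega> + (LINT s:{0..t}|lborel. b s \<omega>) + Y \<omega>)))"

definition mexp :: "'a measure \<Rightarrow> (real \<Rightarrow> 'a \<Rightarrow> 'v::{banach,second_countable_topology}) \<Rightarrow> real \<Rightarrow> 'v" where
  "mexp M x s = (LINT \<omega>|M. x s \<omega>)"

definition linf :: "real \<Rightarrow> (real \<Rightarrow> 'v::euclidean_space) \<Rightarrow> bool" where
  "linf T f \<longleftrightarrow> f \<in> borel_measurable (restrict_space borel {0..T}) \<and> bounded (f ` {0..T})"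

text \<open>Block-diagonal diag(X_1,...,X_N) where the columns of X belonging to player i form X_i.\<close>
definition bdiag :: "('m::finite \<Rightarrow> 'p::finite) \<Rightarrow> real^'m^'n::finite \<Rightarrow> real^'m^('p \<times> 'n)" where
  "bdiag own X = (\<chi> r j. if own j = fst r then X $ snd r $ j else 0)"

definition cdiag :: "real^'n::finite^'n \<Rightarrow> real^('p::finite \<times> 'n)^('p \<times> 'n)" where
  "cdiag X = (\<chi> r c. if fst r = fst c then X $ snd r $ snd c else 0)"

definition blk2 :: "real^'c1::finite^'r1::finite \<Rightarrow> real^'c2::finite^'r1 \<Rightarrow> real^'c1^'r2::finite \<Rightarrow> real^'c2^'r2
    \<Rightarrow> real^('c1 + 'c2)^('r1 + 'r2)" where
  "blk2 P Q R S = (\<chi> r c. case r of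
      Inl i \<Rightarrow> (case c of Inl j \<Rightarrow> P $ i $ j | Inr j \<Rightarrow> Q $ i $ j)
    | Inr i \<Rightarrow> (case c of Inl j \<Rightarrow> R $ i $ j | Inr j \<Rightarrow> S $ i $ j))"

definition vstack :: "real^'c::finite^'r1::finite \<Rightarrow> real^'c^'r2::finite \<Rightarrow> real^'c^('r1 + 'r2)" where
  "vstack P Q = (\<chi> r. case r of Inl i \<Rightarrow> P $ i | Inr i \<Rightarrow> Q $ i)"

definition stack :: "real^'a::finite \<Rightarrow> real^'b::finite \<Rightarrow> real^('a + 'b)" where
  "stack x y = (\<chi> r. case r of Inl i \<Rightarrow> x $ i | Inr i \<Rightarrow> y $ i)"

definition vtop :: "real^('a::finite + 'b::finite) \<Rightarrow> real^'a" where "vtop v = (\<chi> i. v $ Inl i)"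
definition vbot :: "real^('a::finite + 'b::finite) \<Rightarrow> real^'b" where "vbot v = (\<chi> i. v $ Inr i)"

text \<open>'n: state index (R^n); 'k: leader control index (R^{m_0}); 'm: stacked follower
  control index (R^{m_{-0}}), with own j the player owning coordinate j; 'p: players 1..N.
  Stacked quantities R^{Nn} are indexed by 'p \<times> 'n.\<close>
record ('n::finite, 'k::finite, 'm::finite, 'p::finite) coef =
  cA :: "real \<Rightarrow> real^'n^'n"
  cAb :: "real \<Rightarrow> real^'n^'n"
  cC :: "real \<Rightarrow> real^'n^'n"
  cCb :: "real \<Rightarrow> real^'n^'n"
  cB0 :: "real \<Rightarrow> real^'k^'n"
  cB0b :: "real \<Rightarrow> real^'k^'n"
  cD0 :: "real \<Rightarrow> real^'k^'n"
  cD0b :: "real \<Rightarrow> real^'k^'n"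
  cBm :: "real \<Rightarrow> real^'m^'n"
  cBmb :: "real \<Rightarrow> real^'m^'n"
  cDm :: "real \<Rightarrow> real^'m^'n"
  cDmb :: "real \<Rightarrow> real^'m^'n"
  cown :: "'m \<Rightarrow> 'p"
  cR :: "real \<Rightarrow> real^'m^'m"
  cRb :: "real \<Rightarrow> real^'m^'m"
  cQ :: "real \<Rightarrow> real^'n^('p \<times> 'n)"
  cQb :: "real \<Rightarrow> real^'n^('p \<times> 'n)"
  cH :: "real^'n^('p \<times> 'n)"
  cHb :: "real^'n^('p \<times> 'n)"

definition blocksym :: "real^'n::finite^('p::finite \<times> 'n) \<Rightarrow> bool" where
  "blocksym X \<longleftrightarrow> (\<forall>i k l. X $ (i,k) $ l = X $ (i,l) $ k)"

definition blockdiag_sym :: "('m::finite \<Rightarrow> 'p) \<Rightarrow> real^'m^'m \<Rightarrow> bool" where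
  "blockdiag_sym own X \<longleftrightarrow> transpose X = X \<and> (\<forall>j l. own j \<noteq> own l \<longrightarrow> X $ j $ l = 0)"

text \<open>Standing assumptions on the coefficients: membership in the stated L^infty spaces,
  symmetry, R = diag(R_1,...,R_N), every m_i \<ge> 1.\<close>
definition coef_ok :: "('n::finite, 'k::finite, 'm::finite, 'p::finite) coef \<Rightarrow> real \<Rightarrow> bool" where
  "coef_ok c T \<longleftrightarrow>
     linf T (cA c) \<and> linf T (cAb c) \<and> linf T (cC c) \<and> linf T (cCb c) \<and>
     linf T (cB0 c) \<and> linf T (cB0b c) \<and> linf T (cD0 c) \<and> linf T (cD0b c) \<and>
     linf T (cBm c) \<and> linf T (cBmb c) \<and> linf T (cDm c) \<and> linf T (cDmb c) \<and>
     linf T (cR c) \<and> linf T (cRb c) \<and> linf T (cQ c) \<and> linf T (cQb c) \<and>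
     surj (cown c) \<and>
     (\<forall>s. blockdiag_sym (cown c) (cR c s) \<and> blockdiag_sym (cown c) (cRb c s)) \<and>
     (\<forall>s. blocksym (cQ c s) \<and> blocksym (cQb c s)) \<and> blocksym (cH c) \<and> blocksym (cHb c)"

definition cm :: "real^'m^'n \<Rightarrow> real^'m^'m \<Rightarrow> real^'m^'r \<Rightarrow> real^'r^'n" where
  "cm L R X = - (L ** matrix_inv R ** transpose X)"

definition cmb :: "real^'m^'n \<Rightarrow> real^'m^'n \<Rightarrow> real^'m^'m \<Rightarrow> real^'m^'m
    \<Rightarrow> real^'m^'r \<Rightarrow> real^'m^'r \<Rightarrow> real^'r^'n" where
  "cmb L Lb R Rb X Xb = L ** matrix_inv R ** transpose X
      - (L + Lb) ** matrix_inv (R + Rb) ** transpose (X + Xb)"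

definition By :: "('n::finite, 'k::finite, 'm::finite, 'p::finite) coef \<Rightarrow> real \<Rightarrow> real^('p\<times>'n)^'n" where
  "By c s = cm (cBm c s) (cR c s) (bdiag (cown c) (cBm c s))"
definition Byb :: "('n::finite, 'k::finite, 'm::finite, 'p::finite) coef \<Rightarrow> real \<Rightarrow> real^('p\<times>'n)^'n" where
  "Byb c s = cmb (cBm c s) (cBmb c s) (cR c s) (cRb c s)
              (bdiag (cown c) (cBm c s)) (bdiag (cown c) (cBmb c s))"
definition Bz :: "('n::finite, 'k::finite, 'm::finite, 'p::finite) coef \<Rightarrow> real \<Rightarrow> real^('p\<times>'n)^'n" where
  "Bz c s = cm (cBm c s) (cR c s) (bdiag (cown c) (cDm c s))"
definition Bzb :: "('n::finite, 'k::finite, 'm::finite, 'p::finite) coef \<Rightarrow> real \<Rightarrow> real^('p\<times>'n)^'n" where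
  "Bzb c s = cmb (cBm c s) (cBmb c s) (cR c s) (cRb c s)
              (bdiag (cown c) (cDm c s)) (bdiag (cown c) (cDmb c s))"
definition Dy :: "('n::finite, 'k::finite, 'm::finite, 'p::finite) coef \<Rightarrow> real \<Rightarrow> real^('p\<times>'n)^'n" where
  "Dy c s = cm (cDm c s) (cR c s) (bdiag (cown c) (cBm c s))"
definition Dyb :: "('n::finite, 'k::finite, 'm::finite, 'p::finite) coef \<Rightarrow> real \<Rightarrow> real^('p\<times>'n)^'n" where
  "Dyb c s = cmb (cDm c s) (cDmb c s) (cR c s) (cRb c s)
              (bdiag (cown c) (cBm c s)) (bdiag (cown c) (cBmb c s))"
definition Dz :: "('n::finite, 'k::finite, 'm::finite, 'p::finite) coef \<Rightarrow> real \<Rightarrow> real^('p\<times>'n)^'n" where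
  "Dz c s = cm (cDm c s) (cR c s) (bdiag (cown c) (cDm c s))"
definition Dzb :: "('n::finite, 'k::finite, 'm::finite, 'p::finite) coef \<Rightarrow> real \<Rightarrow> real^('p\<times>'n)^'n" where
  "Dzb c s = cmb (cDm c s) (cDmb c s) (cR c s) (cRb c s)
              (bdiag (cown c) (cDm c s)) (bdiag (cown c) (cDmb c s))"

definition "Ah c s = cA c s + cAb c s"
definition "Ch c s = cC c s + cCb c s"
definition "B0h c s = cB0 c s + cB0b c s"
definition "D0h c s = cD0 c s + cD0b c s"
definition "Byh c s = By c s + Byb c s"
definition "Bzh c s = Bz c s + Bzb c s"
definition "Dyh c s = Dy c s + Dyb c s"
definition "Dzh c s = Dz c s + Dzb c s"

definition gdrift where
  "gdrift c M x y z u s \<omega> =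
     cA c s *v x s \<omega> + cAb c s *v mexp M x s + By c s *v y s \<omega> + Byb c s *v mexp M y s
     + Bz c s *v z s \<omega> + Bzb c s *v mexp M z s + cB0 c s *v u s \<omega> + cB0b c s *v mexp M u s"

definition gdiff where
  "gdiff c M x y z u s \<omega> =
     cC c s *v x s \<omega> + cCb c s *v mexp M x s + Dy c s *v y s \<omega> + Dyb c s *v mexp M y s
     + Dz c s *v z s \<omega> + Dzb c s *v mexp M z s + cD0 c s *v u s \<omega> + cD0b c s *v mexp M u s"

definition ydrift where
  "ydrift c M x y z s \<omega> = - (cQ c s *v x s \<omega> + cQb c s *v mexp M x s
     + transpose (cdiag (cA c s)) *v y s \<omega> + transpose (cdiag (cAb c s)) *v mexp M y s
     + transpose (cdiag (cC c s)) *v z s \<omega> + transpose (cdiag (cCb c s)) *v mexp M z s)"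

definition mfgbcs :: "('n::finite, 'k::finite, 'm::finite, 'p::finite) coef \<Rightarrow> 'a measure
    \<Rightarrow> (real \<Rightarrow> 'a \<Rightarrow> real) \<Rightarrow> real \<Rightarrow> (real \<Rightarrow> 'a \<Rightarrow> real^'k) \<Rightarrow> (real \<Rightarrow> 'a \<Rightarrow> real^'n)
    \<Rightarrow> (real \<Rightarrow> 'a \<Rightarrow> real^('p\<times>'n)) \<Rightarrow> (real \<Rightarrow> 'a \<Rightarrow> real^('p\<times>'n)) \<Rightarrow> bool" where
  "mfgbcs c M W T u x y z \<longleftrightarrow>
     sde M W T x (gdrift c M x y z u) (gdiff c M x y z u) \<and>
     sde M W T y (ydrift c M x y z) z \<and>
     (AE \<omega> in M. y T \<omega> = cH c *v x T \<omega> + cHb c *v mexp M x T)"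

definition "invDD c s = matrix_inv (cD0 c s ** transpose (cD0 c s))"
definition "invDDh c s = matrix_inv (D0h c s ** transpose (D0h c s))"

definition "A1 c s = cA c s - cB0 c s ** transpose (cD0 c s) ** invDD c s ** cC c s"
definition "A1h c s = Ah c s - B0h c s ** transpose (D0h c s) ** invDDh c s ** Ch c s"
definition "A2 c s = By c s - cB0 c s ** transpose (cD0 c s) ** invDD c s ** Dy c s"
definition "A2h c s = Byh c s - B0h c s ** transpose (D0h c s) ** invDDh c s ** Dyh c s"
definition "C1 c s = cB0 c s ** transpose (cD0 c s) ** invDD c s"
definition "C1h c s = B0h c s ** transpose (D0h c s) ** invDDh c s"
definition "C2 c s = Bz c s - cB0 c s ** transpose (cD0 c s) ** invDD c s ** Dz c s"
definition "C2h c s = Bzh c s - B0h c s ** transpose (D0h c s) ** invDDh c s ** Dzh c s"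
definition "B1 c s = cB0 c s ** (mat 1 - transpose (cD0 c s) ** invDD c s ** cD0 c s)"
definition "B1h c s = B0h c s ** (mat 1 - transpose (D0h c s) ** invDDh c s ** D0h c s)"

definition "bA c s = blk2 (A1 c s) (A2 c s) (- cQ c s) (- transpose (cdiag (cA c s)))"
definition "bAb c s = blk2 (A1h c s - A1 c s) (A2h c s - A2 c s) (- cQb c s)
                         (- transpose (cdiag (cAb c s)))"
definition "bC c s = blk2 (C1 c s) (C2 c s) 0 (- transpose (cdiag (cC c s)))"
definition "bCb c s = blk2 (C1h c s - C1 c s) (C2h c s - C2 c s) 0 (- transpose (cdiag (cCb c s)))"
definition "bB c s = vstack (B1 c s) 0"
definition "bBb c s = vstack (B1h c s - B1 c s) 0"

definition bwd :: "('n::finite, 'k::finite, 'm::finite, 'p::finite) coef \<Rightarrow> 'a measure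
    \<Rightarrow> (real \<Rightarrow> 'a \<Rightarrow> real) \<Rightarrow> real \<Rightarrow> (real \<Rightarrow> 'a \<Rightarrow> real^'k)
    \<Rightarrow> (real \<Rightarrow> 'a \<Rightarrow> real^('n + ('p\<times>'n))) \<Rightarrow> (real \<Rightarrow> 'a \<Rightarrow> real^('n + ('p\<times>'n))) \<Rightarrow> bool" where
  "bwd c M W T v Y Z \<longleftrightarrow>
     sde M W T Y (\<lambda>s \<omega>. bA c s *v Y s \<omega> + bAb c s *v mexp M Y s + bC c s *v Z s \<omega>
                      + bCb c s *v mexp M Z s + bB c s *v v s \<omega> + bBb c s *v mexp M v s) Z \<and>
     (AE \<omega> in M. vbot (Y T \<omega>) = cH c *v vtop (Y T \<omega>) + cHb c *v mexp M (\<lambda>s \<omega>. vtop (Y s \<omega>)) T)"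

definition qfrom :: "('n::finite, 'k::finite, 'm::finite, 'p::finite) coef \<Rightarrow> 'a measure
    \<Rightarrow> (real \<Rightarrow> 'a \<Rightarrow> real^'k) \<Rightarrow> (real \<Rightarrow> 'a \<Rightarrow> real^'n)
    \<Rightarrow> (real \<Rightarrow> 'a \<Rightarrow> real^('p\<times>'n)) \<Rightarrow> (real \<Rightarrow> 'a \<Rightarrow> real^('p\<times>'n)) \<Rightarrow> real \<Rightarrow> 'a \<Rightarrow> real^'n" where
  "qfrom c M u x y z s \<omega> =
     cC c s *v (x s \<omega> - mexp M x s) + Dy c s *v (y s \<omega> - mexp M y s)
     + Dz c s *v (z s \<omega> - mexp M z s) + cD0 c s *v (u s \<omega> - mexp M u s)
     + Ch c s *v mexp M x s + Dyh c s *v mexp M y s + Dzh c s *v mexp M z s + D0h c s *v mexp M u s"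

definition ufrom :: "('n::finite, 'k::finite, 'm::finite, 'p::finite) coef \<Rightarrow> 'a measure
    \<Rightarrow> (real \<Rightarrow> 'a \<Rightarrow> real^'k) \<Rightarrow> (real \<Rightarrow> 'a \<Rightarrow> real^'n) \<Rightarrow> (real \<Rightarrow> 'a \<Rightarrow> real^('p\<times>'n))
    \<Rightarrow> (real \<Rightarrow> 'a \<Rightarrow> real^'n) \<Rightarrow> (real \<Rightarrow> 'a \<Rightarrow> real^('p\<times>'n)) \<Rightarrow> real \<Rightarrow> 'a \<Rightarrow> real^'k" where
  "ufrom c M v x y q z s \<omega> =
     (transpose (cD0 c s) ** invDD c s) *v
        ((q s \<omega> - mexp M q s) - cC c s *v (x s \<omega> - mexp M x s)
         - Dy c s *v (y s \<omega> - mexp M y s) - Dz c s *v (z s \<omega> - mexp M z s))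
     + (mat 1 - transpose (cD0 c s) ** invDD c s ** cD0 c s) *v (v s \<omega> - mexp M v s)
     + (transpose (D0h c s) ** invDDh c s) *v
        (mexp M q s - Ch c s *v mexp M x s - Dyh c s *v mexp M y s - Dzh c s *v mexp M z s)
     + (mat 1 - transpose (D0h c s) ** invDDh c s ** D0h c s) *v mexp M v s"

end

theory Submission
  imports Defs
begin


lemma bm_vec_nth[measurable (raw)]:
  fixes f :: "'x \<Rightarrow> 'b::euclidean_space^'n"
  shows "f \<in> borel_measurable N \<Longrightarrow> (\<lambda>x. f x $ i) \<in> borel_measurable N"
  by (rule measurable_compose[of f N borel]) 
     (auto intro!: borel_measurable_continuous_onI linear_continuous_on bounded_linear_vec_nth)

lemma bm_vec_lambda:
  fixes f :: "'x \<Rightarrow> 'b::euclidean_space^'n"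
  assumes "\<And>i. (\<lambda>x. f x $ i) \<in> borel_measurable N"
  shows "f \<in> borel_measurable N"
  unfolding borel_measurable_euclidean_space[where f=f]
proof
  fix b :: "'b^'n" assume "b \<in> Basis"
  then obtain i u where b: "b = axis i u" "u \<in> Basis" unfolding Basis_vec_def by auto
  have "(\<lambda>x. f x $ i \<bullet> u) \<in> borel_measurable N" using assms[of i] by measurable
  then show "(\<lambda>x. f x \<bullet> b) \<in> borel_measurable N" by (simp add: b inner_axis)
qed

lemma bm_chi[measurable (raw)]:
  fixes g :: "'n::finite \<Rightarrow> 'x \<Rightarrow> 'b::euclidean_space"
  assumes "\<And>i. g i \<in> borel_measurable N"
  shows "(\<lambda>x. \<chi> i. g i x) \<in> borel_measurable N"
  by (rule bm_vec_lambda) (simp add: assms)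

lemma bm_mvm[measurable (raw)]:
  fixes f :: "'x \<Rightarrow> real^'m^'n" and g :: "'x \<Rightarrow> real^'m"
  assumes [measurable]: "f \<in> borel_measurable N" "g \<in> borel_measurable N"
  shows "(\<lambda>x. f x *v g x) \<in> borel_measurable N"
  unfolding matrix_vector_mult_def by measurable

lemma bm_mm[measurable (raw)]:
  fixes f :: "'x \<Rightarrow> real^'m^'n" and g :: "'x \<Rightarrow> real^'k^'m"
  assumes [measurable]: "f \<in> borel_measurable N" "g \<in> borel_measurable N"
  shows "(\<lambda>x. f x ** g x) \<in> borel_measurable N"
  unfolding matrix_matrix_mult_def by measurable

lemma bm_transpose[measurable (raw)]:
  fixes f :: "'x \<Rightarrow> real^'m^'n"
  shows "f \<in> borel_measurable N \<Longrightarrow> (\<lambda>x. transpose (f x)) \<in> borel_measurable N"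
  unfolding transpose_def by measurable

lemma bm_stack[measurable (raw)]:
  fixes f :: "'x \<Rightarrow> real^'a::finite" and g :: "'x \<Rightarrow> real^'b::finite"
  assumes "f \<in> borel_measurable N" "g \<in> borel_measurable N"
  shows "(\<lambda>x. stack (f x) (g x)) \<in> borel_measurable N"
proof (rule bm_vec_lambda)
  fix r show "(\<lambda>x. stack (f x) (g x) $ r) \<in> borel_measurable N"
    using assms by (cases r) (auto simp: stack_def)
qed

lemma bm_vtop[measurable (raw)]:
  fixes f :: "'x \<Rightarrow> real^('a::finite + 'b::finite)"
  shows "f \<in> borel_measurable N \<Longrightarrow> (\<lambda>x. vtop (f x)) \<in> borel_measurable N"
  unfolding vtop_def by measurable

lemma bm_vbot[measurable (raw)]:
  fixes f :: "'x \<Rightarrow> real^('a::finite + 'b::finite)"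
  shows "f \<in> borel_measurable N \<Longrightarrow> (\<lambda>x. vbot (f x)) \<in> borel_measurable N"
  unfolding vbot_def by measurable

lemma bm_vstack[measurable (raw)]:
  fixes f :: "'x \<Rightarrow> real^'c::finite^'a::finite" and g :: "'x \<Rightarrow> real^'c^'b::finite"
  assumes "f \<in> borel_measurable N" "g \<in> borel_measurable N"
  shows "(\<lambda>x. vstack (f x) (g x)) \<in> borel_measurable N"
proof (rule bm_vec_lambda)
  fix r show "(\<lambda>x. vstack (f x) (g x) $ r) \<in> borel_measurable N"
    using assms by (cases r) (auto simp: vstack_def)
qed

lemma bm_blk2[measurable (raw)]:
  fixes P :: "'x \<Rightarrow> real^'c1::finite^'r1::finite" and Q :: "'x \<Rightarrow> real^'c2::finite^'r1"
    and R :: "'x \<Rightarrow> real^'c1^'r2::finite" and S :: "'x \<Rightarrow> real^'c2^'r2"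
  assumes "P \<in> borel_measurable N" "Q \<in> borel_measurable N" "R \<in> borel_measurable N" "S \<in> borel_measurable N"
  shows "(\<lambda>x. blk2 (P x) (Q x) (R x) (S x)) \<in> borel_measurable N"
proof (rule bm_vec_lambda)
  fix r show "(\<lambda>x. blk2 (P x) (Q x) (R x) (S x) $ r) \<in> borel_measurable N"
  proof (rule bm_vec_lambda)
    fix c show "(\<lambda>x. blk2 (P x) (Q x) (R x) (S x) $ r $ c) \<in> borel_measurable N"
      using assms by (cases r; cases c) (auto simp: blk2_def)
  qed
qed

lemma bm_cdiag[measurable (raw)]:
  fixes f :: "'x \<Rightarrow> real^'n::finite^'n"
  assumes "f \<in> borel_measurable N"
  shows "(\<lambda>x. (cdiag (f x) :: real^('p::finite \<times> 'n)^('p \<times> 'n))) \<in> borel_measurable N"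
proof (rule bm_vec_lambda)
  fix r show "(\<lambda>x. (cdiag (f x) :: real^('p::finite \<times> 'n)^('p \<times> 'n)) $ r) \<in> borel_measurable N"
  proof (rule bm_vec_lambda)
    fix c show "(\<lambda>x. (cdiag (f x) :: real^('p::finite \<times> 'n)^('p \<times> 'n)) $ r $ c) \<in> borel_measurable N"
      using assms by (cases "fst r = fst c") (auto simp: cdiag_def)
  qed
qed

lemma bm_bdiag[measurable (raw)]:
  fixes f :: "'x \<Rightarrow> real^'m::finite^'n::finite" and own :: "'m \<Rightarrow> 'p::finite"
  assumes "f \<in> borel_measurable N"
  shows "(\<lambda>x. bdiag own (f x)) \<in> borel_measurable N"
proof (rule bm_vec_lambda)
  fix r show "(\<lambda>x. bdiag own (f x) $ r) \<in> borel_measurable N"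
  proof (rule bm_vec_lambda)
    fix c show "(\<lambda>x. bdiag own (f x) $ r $ c) \<in> borel_measurable N"
      using assms by (cases "own c = fst r") (auto simp: bdiag_def)
  qed
qed

lemma pred_const_my[measurable (raw)]: "{x \<in> space N. P} \<in> sets N"
  by (cases P) auto

lemma bm_det[measurable (raw)]:
  fixes f :: "'x \<Rightarrow> real^'n::finite^'n"
  assumes [measurable]: "f \<in> borel_measurable N"
  shows "(\<lambda>x. det (f x)) \<in> borel_measurable N"
  unfolding det_def by measurable

lemma matrix_inv_singular:
  fixes A :: "real^'n::finite^'n"
  assumes "det A = 0"
  shows "matrix_inv A = (SOME A'. False)"
proof -
  have "\<not> invertible A" using assms invertible_det_nz by auto
  then have "(\<lambda>A'. A ** A' = mat 1 \<and> A' ** A = mat 1) = (\<lambda>A'. False)"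
    unfolding invertible_def by auto
  then show ?thesis unfolding matrix_inv_def by simp
qed

lemma matrix_inv_right:
  fixes A :: "real^'n::finite^'n"
  assumes "invertible A"
  shows "A ** matrix_inv A = mat 1" "matrix_inv A ** A = mat 1"
  using someI_ex[OF assms[unfolded invertible_def]] unfolding matrix_inv_def by auto

lemma matrix_inv_cramer:
  fixes A :: "real^'n::finite^'n"
  assumes "det A \<noteq> 0"
  shows "matrix_inv A = (\<chi> i k. det (\<chi> a b. if b = i then axis k 1 $ a else A $ a $ b) / det A)"
proof -
  let ?B = "matrix_inv A"
  have inv: "invertible A" using assms invertible_det_nz by auto
  have col: "?B *v axis k 1 = (\<chi> i. det (\<chi> a b. if b = i then axis k 1 $ a else A $ a $ b) / det A)" for k
  proof -
    have "A *v (?B *v axis k 1) = axis k 1"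
      by (simp add: matrix_vector_mul_assoc matrix_inv_right(1)[OF inv])
    then show ?thesis using cramer[OF assms] by blast
  qed
  have "?B $ i $ k = (?B *v axis k 1) $ i" for i k
    by (simp add: matrix_vector_mult_def axis_def if_distrib cong: if_cong)
  then show ?thesis using col by (simp add: vec_eq_iff)
qed

lemma matrix_inv_eq:
  fixes A :: "real^'n::finite^'n"
  shows "matrix_inv A = (if det A \<noteq> 0 then (\<chi> i k. det (\<chi> a b. if b = i then axis k 1 $ a else A $ a $ b) / det A)
     else (SOME A'. False))"
  using matrix_inv_cramer matrix_inv_singular by auto

lemma bm_matrix_inv[measurable (raw)]:
  fixes f :: "'x \<Rightarrow> real^'n::finite^'n"
  assumes [measurable]: "f \<in> borel_measurable N"
  shows "(\<lambda>x. matrix_inv (f x)) \<in> borel_measurable N"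
  unfolding matrix_inv_eq by measurable

lemma norm_mat_entry: "\<bar>(A::real^'m::finite^'n::finite) $ i $ j\<bar> \<le> norm A"
  using component_le_norm_cart[of "A $ i" j] Finite_Cartesian_Product.norm_nth_le[of A i] by linarith

lemma norm_mat_by_entries:
  fixes A :: "real^'m::finite^'n::finite"
  assumes "\<And>i j. \<bar>A $ i $ j\<bar> \<le> K"
  shows "norm A \<le> real CARD('n) * (real CARD('m) * K)"
proof -
  have "norm A \<le> (\<Sum>i\<in>UNIV. norm (A $ i))"
    unfolding norm_vec_def by (rule L2_set_le_sum) auto
  also have "\<dots> \<le> (\<Sum>i\<in>(UNIV::'n set). real CARD('m) * K)"
  proof (rule sum_mono)
    fix i
    have "norm (A $ i) \<le> (\<Sum>j\<in>UNIV. \<bar>A $ i $ j\<bar>)" by (rule norm_le_l1_cart)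
    also have "\<dots> \<le> (\<Sum>j\<in>(UNIV::'m set). K)" by (rule sum_mono) (rule assms)
    finally show "norm (A $ i) \<le> real CARD('m) * K" by simp
  qed
  finally show ?thesis by simp
qed

lemma norm_mvm_le:
  fixes A :: "real^'m::finite^'n::finite" and x :: "real^'m"
  shows "norm (A *v x) \<le> real CARD('n) * (real CARD('m) * (norm A * norm x))"
proof -
  have e: "\<bar>(A *v x) $ i\<bar> \<le> real CARD('m) * (norm A * norm x)" for i
  proof -
    have "\<bar>(A *v x) $ i\<bar> \<le> (\<Sum>j\<in>UNIV. \<bar>A $ i $ j\<bar> * \<bar>x $ j\<bar>)"
      unfolding matrix_vector_mult_def by (simp add: sum_abs[THEN order_trans] abs_mult)
    also have "\<dots> \<le> (\<Sum>j\<in>(UNIV::'m set). norm A * norm x)"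
      by (intro sum_mono mult_mono norm_mat_entry component_le_norm_cart) auto
    finally show ?thesis by simp
  qed
  have "norm (A *v x) \<le> (\<Sum>i\<in>UNIV. \<bar>(A *v x) $ i\<bar>)" by (rule norm_le_l1_cart)
  also have "\<dots> \<le> (\<Sum>i\<in>(UNIV::'n set). real CARD('m) * (norm A * norm x))"
    by (rule sum_mono) (rule e)
  finally show ?thesis by simp
qed

lemma norm_mm_le:
  fixes A :: "real^'m::finite^'n::finite" and B :: "real^'k::finite^'m"
  shows "norm (A ** B) \<le> real CARD('n) * (real CARD('k) * (real CARD('m) * (norm A * norm B)))"
proof (rule norm_mat_by_entries)
  fix i j
  have "\<bar>(A ** B) $ i $ j\<bar> \<le> (\<Sum>l\<in>UNIV. \<bar>A $ i $ l\<bar> * \<bar>B $ l $ j\<bar>)"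
    unfolding matrix_matrix_mult_def by (simp add: sum_abs[THEN order_trans] abs_mult)
  also have "\<dots> \<le> (\<Sum>l\<in>(UNIV::'m set). norm A * norm B)"
    by (intro sum_mono mult_mono norm_mat_entry) auto
  finally show "\<bar>(A ** B) $ i $ j\<bar> \<le> real CARD('m) * (norm A * norm B)" by simp
qed

lemma norm_transpose_le:
  fixes A :: "real^'m::finite^'n::finite"
  shows "norm (transpose A) \<le> real CARD('m) * (real CARD('n) * norm A)"
  by (rule norm_mat_by_entries) (simp add: transpose_def norm_mat_entry)

lemma norm_bdiag_le:
  fixes A :: "real^'m::finite^'n::finite" and own :: "'m \<Rightarrow> 'p::finite"
  shows "norm (bdiag own A) \<le> real CARD('p \<times> 'n) * (real CARD('m) * norm A)"
  by (rule norm_mat_by_entries) (simp add: bdiag_def norm_mat_entry)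

lemma norm_vec_sq: "(norm (v::'b::real_normed_vector^'n::finite))\<^sup>2 = (\<Sum>i\<in>UNIV. (norm (v $ i))\<^sup>2)"
  unfolding norm_vec_def L2_set_def by (simp add: sum_nonneg)

lemma norm_stack_sq: "(norm (stack (a::real^'a::finite) (b::real^'b::finite)))\<^sup>2 = (norm a)\<^sup>2 + (norm b)\<^sup>2"
proof -
  have "(norm (stack a b))\<^sup>2 = (\<Sum>r\<in>UNIV <+> UNIV. (norm (stack a b $ r))\<^sup>2)"
    unfolding norm_vec_sq UNIV_Plus_UNIV ..
  also have "\<dots> = (\<Sum>i\<in>UNIV. (norm (a $ i))\<^sup>2) + (\<Sum>i\<in>UNIV. (norm (b $ i))\<^sup>2)"
    by (subst sum.Plus) (auto simp: stack_def o_def)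
  finally show ?thesis by (simp add: norm_vec_sq)
qed

lemma stack_vtop_vbot: "stack (vtop v) (vbot v) = v"
  by (simp add: stack_def vtop_def vbot_def vec_eq_iff split: sum.split)

lemma vtop_stack[simp]: "vtop (stack a b) = a" and vbot_stack[simp]: "vbot (stack a b) = b"
  by (simp_all add: stack_def vtop_def vbot_def vec_eq_iff)

lemma norm_vtop_le: "norm (vtop v) \<le> norm v" and norm_vbot_le: "norm (vbot v) \<le> norm v"
proof -
  have "(norm v)\<^sup>2 = (norm (vtop v))\<^sup>2 + (norm (vbot v))\<^sup>2"
    using norm_stack_sq[of "vtop v" "vbot v"] by (simp add: stack_vtop_vbot)
  then show "norm (vtop v) \<le> norm v" "norm (vbot v) \<le> norm v"
    by (auto intro: power2_le_imp_le)
qed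


lemma sq_integrable_gen:
  fixes X :: "'a \<Rightarrow> 'v::euclidean_space"
  assumes P: "prob_space M" and m: "X \<in> borel_measurable M" and f: "(\<integral>\<^sup>+\<omega>. ennreal ((norm (X \<omega>))\<^sup>2) \<partial>M) < \<infinity>"
  shows "integrable M X" "integrable M (\<lambda>\<omega>. (norm (X \<omega>))\<^sup>2)"
proof -
  interpret prob_space M by fact
  show i2: "integrable M (\<lambda>\<omega>. (norm (X \<omega>))\<^sup>2)"
  proof (rule integrableI_bounded)
    show "(\<lambda>\<omega>. (norm (X \<omega>))\<^sup>2) \<in> borel_measurable M" using m by measurable
    have "(\<lambda>\<omega>. ennreal (norm ((norm (X \<omega>))\<^sup>2))) = (\<lambda>\<omega>. ennreal ((norm (X \<omega>))\<^sup>2))" by simp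
    then show "(\<integral>\<^sup>+\<omega>. ennreal (norm ((norm (X \<omega>))\<^sup>2)) \<partial>M) < \<infinity>" using f by metis
  qed
  have i3: "integrable M (\<lambda>\<omega>. 1 + (norm (X \<omega>))\<^sup>2)" using i2 by (rule Bochner_Integration.integrable_add[OF integrable_const])
  have b: "norm (X \<omega>) \<le> 1 + (norm (X \<omega>))\<^sup>2" for \<omega>
    proof (cases "norm (X \<omega>) \<le> 1")
      case True then show ?thesis using zero_le_power2[of "norm (X \<omega>)"] by linarith
    next
      case False
      then have "norm (X \<omega>) * 1 \<le> norm (X \<omega>) * norm (X \<omega>)" by (intro mult_left_mono) auto
      then show ?thesis by (simp add: power2_eq_square)
    qed
  show "integrable M X" 
    by (rule Bochner_Integration.integrable_bound[OF i3 m]) (intro AE_I2, simp add: b)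
qed


lemma sup_eq_rat:
  fixes h :: "real \<Rightarrow> ennreal"
  assumes T: "0 < T" and c: "continuous_on {0..T} h"
  shows "(SUP s\<in>{0..T}. h s) = (SUP s\<in>{0..T} \<inter> \<rat>. h s)"
proof (rule antisym)
  show "(SUP s\<in>{0..T} \<inter> \<rat>. h s) \<le> (SUP s\<in>{0..T}. h s)" by (rule SUP_subset_mono) auto
  show "(SUP s\<in>{0..T}. h s) \<le> (SUP s\<in>{0..T} \<inter> \<rat>. h s)"
  proof (rule SUP_least)
    fix s assume s: "s \<in> {0..T}"
    show "h s \<le> (SUP s\<in>{0..T} \<inter> \<rat>. h s)"
    proof (rule dense_le)
      fix y assume y: "y < h s"
      have "(h \<longlongrightarrow> h s) (at s within {0..T})" using c s continuous_on_def by blast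
      then have "eventually (\<lambda>x. y < h x) (at s within {0..T})" using y order_tendstoD(1) by blast
      then obtain d where d: "d > 0" "\<forall>x\<in>{0..T}. x \<noteq> s \<and> dist x s < d \<longrightarrow> y < h x"
        unfolding eventually_at by auto
      obtain r where r: "r \<in> {0..T} \<inter> \<rat>" "r \<noteq> s" "dist r s < d"
      proof (cases "s < T")
        case True
        obtain r where "r \<in> \<rat>" "s < r" "r < min (s + d) T"
          using Rats_dense_in_real[of s "min (s+d) T"] True d by auto
        with that[of r] s show ?thesis by (auto simp: dist_real_def)
      next
        case False
        then have sT: "s = T" using s by auto
        obtain r where "r \<in> \<rat>" "max 0 (s - d) < r" "r < s"
          using Rats_dense_in_real[of "max 0 (s-d)" s] T d sT by auto
        with that[of r] s show ?thesis by (auto simp: dist_real_def)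
      qed
      then have "y < h r" using d by auto
      also have "h r \<le> (SUP s\<in>{0..T} \<inter> \<rat>. h s)" using r by (intro SUP_upper) auto
      finally show "y \<le> (SUP s\<in>{0..T} \<inter> \<rat>. h s)" by simp
    qed
  qed
qed

lemma sup_meas:
  fixes f :: "real \<Rightarrow> 'a \<Rightarrow> 'v::euclidean_space"
  assumes T: "0 < T" and c: "\<And>\<omega>. \<omega> \<in> space N \<Longrightarrow> continuous_on {0..T} (\<lambda>s. f s \<omega>)"
    and m: "\<And>s. s \<in> {0..T} \<Longrightarrow> f s \<in> borel_measurable N"
  shows "(\<lambda>\<omega>. SUP s\<in>{0..T}. ennreal ((norm (f s \<omega>))\<^sup>2)) \<in> borel_measurable N"
proof -
  have "(\<lambda>\<omega>. SUP s\<in>{0..T} \<inter> \<rat>. ennreal ((norm (f s \<omega>))\<^sup>2)) \<in> borel_measurable N"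
  proof (rule borel_measurable_SUP)
    show "countable ({0..T} \<inter> \<rat>)" by (simp add: countable_rat)
    fix s assume "s \<in> {0..T} \<inter> \<rat>"
    then have [measurable]: "f s \<in> borel_measurable N" using m by auto
    show "(\<lambda>\<omega>. ennreal ((norm (f s \<omega>))\<^sup>2)) \<in> borel_measurable N" by measurable
  qed
  moreover have "(SUP s\<in>{0..T}. ennreal ((norm (f s \<omega>))\<^sup>2)) = (SUP s\<in>{0..T} \<inter> \<rat>. ennreal ((norm (f s \<omega>))\<^sup>2))"
    if "\<omega> \<in> space N" for \<omega>
    by (rule sup_eq_rat[OF T]) (intro continuous_on_ennreal continuous_intros c that)
  ultimately show ?thesis by (subst measurable_cong) auto
qed

locale stc =
  fixes M :: "'a measure" and W :: "real \<Rightarrow> 'a \<Rightarrow> real" and T :: real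
  assumes bm: "brownian M W" and Tpos: "0 < T"
begin

abbreviation "L \<equiv> restrict_space lborel {0..T}"

lemma prob: "prob_space M" using bm unfolding brownian_def by auto

lemma Wmeas: "W t \<in> borel_measurable M" using bm unfolding brownian_def by auto

sublocale P: prob_space M by (rule prob)

lemma F_space: "space (Fnat M W t) = space M"
  unfolding Fnat_def by (simp add: space_measure_of_conv)

lemma F_sets: "sets (Fnat M W t) \<subseteq> sets M"
proof -
  let ?A = "(\<Union>s\<in>{0..t}. {W s -` B \<inter> space M | B. B \<in> sets borel}) \<union> null_sets M"
  have A: "?A \<subseteq> sets M" using Wmeas by (auto simp: measurable_sets)
  then have "?A \<subseteq> Pow (space M)" using sets.sets_into_space by blast
  then have "sets (Fnat M W t) = sigma_sets (space M) ?A" unfolding Fnat_def by (simp add: sets_measure_of)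
  also have "\<dots> \<subseteq> sets M" using A by (rule sets.sigma_sets_subset)
  finally show ?thesis .
qed

lemma pair_sub:
  fixes A :: "'b measure"
  shows "f \<in> measurable (A \<Otimes>\<^sub>M Fnat M W t) N \<Longrightarrow> f \<in> measurable (A \<Otimes>\<^sub>M M) N"
proof (rule measurable_from_subalg)
  show "subalgebra (A \<Otimes>\<^sub>M M) (A \<Otimes>\<^sub>M Fnat M W t)"
    unfolding subalgebra_def
  proof
    show "space (A \<Otimes>\<^sub>M Fnat M W t) = space (A \<Otimes>\<^sub>M M)" by (simp add: space_pair_measure F_space)
    show "sets (A \<Otimes>\<^sub>M Fnat M W t) \<subseteq> sets (A \<Otimes>\<^sub>M M)"
      unfolding sets_pair_measure F_space using F_sets by (intro sigma_sets_mono') blast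
  qed
qed

lemma sets_L: "sets L = sets (restrict_space borel {0..T})"
  by (simp add: sets_restrict_space)

lemma space_L[simp]: "space L = {0..T}" by (simp add: space_restrict_space)

lemma L_fin: "finite_measure L"
  by (rule finite_measureI) (simp add: emeasure_restrict_space emeasure_lborel_Icc_eq)

lemma emeasure_L: "emeasure L (space L) = ennreal T"
  using Tpos by (simp add: emeasure_restrict_space)

sublocale LM: pair_sigma_finite L M
proof -
  interpret Lf: finite_measure L by (rule L_fin)
  show "pair_sigma_finite L M" by unfold_locales
qed

lemma meas_RT_L: "f \<in> borel_measurable (restrict_space borel {0..T}) \<Longrightarrow> f \<in> borel_measurable L"
  using measurable_cong_sets[OF sets_L refl] by blast

lemma meas_L_sub:
  assumes "f \<in> borel_measurable L" "t \<in> {0..T}"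
  shows "f \<in> borel_measurable (restrict_space borel {0..t})"
proof -
  have "f \<in> borel_measurable (restrict_space borel {0..T})"
    using assms measurable_cong_sets[OF sets_L refl] by blast
  then have "f \<in> borel_measurable (restrict_space (restrict_space borel {0..T}) {0..t})"
    by (rule measurable_restrict_space1)
  moreover have "sets (restrict_space (restrict_space borel {0..T}) {0..t}) = sets (restrict_space borel {0..t})"
    using assms(2) by (simp add: sets_restrict_restrict_space Int_absorb1)
  ultimately show ?thesis using measurable_cong_sets by blast
qed

lemma prog_iff: "progressive M F T \<phi> \<longleftrightarrow>
   (\<forall>t\<in>{0..T}. (\<lambda>p. \<phi> (fst p) (snd p)) \<in> borel_measurable (restrict_space borel {0..t} \<Otimes>\<^sub>M F t))"
  unfolding progressive_def by (simp add: case_prod_beta')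

lemma JM: "progressive M (Fnat M W) T \<phi> \<Longrightarrow> (\<lambda>p. \<phi> (fst p) (snd p)) \<in> borel_measurable (L \<Otimes>\<^sub>M M)"
proof -
  assume "progressive M (Fnat M W) T \<phi>"
  then have "(\<lambda>p. \<phi> (fst p) (snd p)) \<in> borel_measurable (restrict_space borel {0..T} \<Otimes>\<^sub>M Fnat M W T)"
    unfolding prog_iff using Tpos by auto
  then have "(\<lambda>p. \<phi> (fst p) (snd p)) \<in> borel_measurable (restrict_space borel {0..T} \<Otimes>\<^sub>M M)"
    by (rule pair_sub)
  moreover have "sets (L \<Otimes>\<^sub>M M) = sets (restrict_space borel {0..T} \<Otimes>\<^sub>M M)"
    by (rule sets_pair_measure_cong[OF sets_L refl])
  ultimately show ?thesis using measurable_cong_sets by blast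
qed

lemma sec_s: "progressive M (Fnat M W) T \<phi> \<Longrightarrow> \<omega> \<in> space M \<Longrightarrow> (\<lambda>s. \<phi> s \<omega>) \<in> borel_measurable L"
  using measurable_Pair1[OF JM] by simp

lemma sec_w: "progressive M (Fnat M W) T \<phi> \<Longrightarrow> s \<in> {0..T} \<Longrightarrow> \<phi> s \<in> borel_measurable M"
  using measurable_Pair2[OF JM, of \<phi> s] by simp

lemma mexp_meas: "progressive M (Fnat M W) T \<phi> \<Longrightarrow> (\<lambda>s. mexp M \<phi> s) \<in> borel_measurable L"
  unfolding mexp_def
  by (rule sigma_finite_measure.borel_measurable_lebesgue_integral[OF prob_space_imp_sigma_finite[OF prob]]) (simp add: JM[unfolded split_beta'] split_beta')

lemma ind_meas:
  fixes f :: "real \<Rightarrow> 'v::euclidean_space"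
  assumes "f \<in> borel_measurable L" "t \<le> T"
  shows "(\<lambda>s. indicator {0..t} s *\<^sub>R f s) \<in> borel_measurable lborel"
proof -
  have eq: "borel_measurable lborel = borel_measurable (borel::real measure)"
    by (rule measurable_cong_sets) simp_all
  have m: "(\<lambda>s. indicator {0..T} s *\<^sub>R f s) \<in> borel_measurable borel"
    using assms(1) by (subst (asm) borel_measurable_restrict_space_iff) (auto simp: eq)
  have "(\<lambda>s. indicator {0..t} s *\<^sub>R (indicator {0..T} s *\<^sub>R f s)) \<in> borel_measurable borel"
    by (rule borel_measurable_scaleR[OF _ m]) simp
  moreover have "(\<lambda>s. indicator {0..t} s *\<^sub>R (indicator {0..T} s *\<^sub>R f s)) = (\<lambda>s. indicator {0..t} s *\<^sub>R f s)"
    using assms(2) by (auto simp: indicator_def)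
  ultimately show ?thesis by (simp add: eq)
qed

lemma sfM: "sigma_finite_measure M" by (rule prob_space_imp_sigma_finite[OF prob])
lemma sfL: "sigma_finite_measure L" using L_fin by (rule finite_measure.axioms(1))

lemma prog_D: "progressive M (Fnat M W) T \<phi> \<Longrightarrow> t \<in> {0..T} \<Longrightarrow>
   (\<lambda>p. \<phi> (fst p) (snd p)) \<in> borel_measurable (restrict_space borel {0..t} \<Otimes>\<^sub>M Fnat M W t)"
  unfolding prog_iff by auto

lemma prog_det: assumes "g \<in> borel_measurable L" shows "progressive M (Fnat M W) T (\<lambda>s \<omega>. g s)"
  unfolding prog_iff
proof
  fix t assume t: "t \<in> {0..T}"
  have [measurable]: "g \<in> borel_measurable (restrict_space borel {0..t})" using meas_L_sub[OF assms t] .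
  show "(\<lambda>p. g (fst p)) \<in> borel_measurable (restrict_space borel {0..t} \<Otimes>\<^sub>M Fnat M W t)" by measurable
qed

lemma prog_add:
  fixes \<phi> \<psi> :: "real \<Rightarrow> 'a \<Rightarrow> real^'n::finite"
  assumes "progressive M (Fnat M W) T \<phi>" "progressive M (Fnat M W) T \<psi>"
  shows "progressive M (Fnat M W) T (\<lambda>s \<omega>. \<phi> s \<omega> + \<psi> s \<omega>)"
  unfolding prog_iff
proof
  fix t assume t: "t \<in> {0..T}"
  note [measurable] = prog_D[OF assms(1) t] prog_D[OF assms(2) t]
  show "(\<lambda>p. \<phi> (fst p) (snd p) + \<psi> (fst p) (snd p)) \<in> borel_measurable (restrict_space borel {0..t} \<Otimes>\<^sub>M Fnat M W t)"
    by measurable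
qed

lemma prog_diff:
  fixes \<phi> \<psi> :: "real \<Rightarrow> 'a \<Rightarrow> real^'n::finite"
  assumes "progressive M (Fnat M W) T \<phi>" "progressive M (Fnat M W) T \<psi>"
  shows "progressive M (Fnat M W) T (\<lambda>s \<omega>. \<phi> s \<omega> - \<psi> s \<omega>)"
  unfolding prog_iff
proof
  fix t assume t: "t \<in> {0..T}"
  note [measurable] = prog_D[OF assms(1) t] prog_D[OF assms(2) t]
  show "(\<lambda>p. \<phi> (fst p) (snd p) - \<psi> (fst p) (snd p)) \<in> borel_measurable (restrict_space borel {0..t} \<Otimes>\<^sub>M Fnat M W t)"
    by measurable
qed

lemma prog_mvm:
  fixes \<phi> :: "real \<Rightarrow> 'a \<Rightarrow> real^'m::finite" and G :: "real \<Rightarrow> real^'m^'n::finite"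
  assumes "G \<in> borel_measurable L" "progressive M (Fnat M W) T \<phi>"
  shows "progressive M (Fnat M W) T (\<lambda>s \<omega>. G s *v \<phi> s \<omega>)"
  unfolding prog_iff
proof
  fix t assume t: "t \<in> {0..T}"
  note [measurable] = prog_D[OF assms(2) t] meas_L_sub[OF assms(1) t]
  show "(\<lambda>p. G (fst p) *v \<phi> (fst p) (snd p)) \<in> borel_measurable (restrict_space borel {0..t} \<Otimes>\<^sub>M Fnat M W t)"
    by measurable
qed

lemma prog_stack:
  fixes \<phi> :: "real \<Rightarrow> 'a \<Rightarrow> real^'m::finite" and \<psi> :: "real \<Rightarrow> 'a \<Rightarrow> real^'n::finite"
  assumes "progressive M (Fnat M W) T \<phi>" "progressive M (Fnat M W) T \<psi>"
  shows "progressive M (Fnat M W) T (\<lambda>s \<omega>. stack (\<phi> s \<omega>) (\<psi> s \<omega>))"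
  unfolding prog_iff
proof
  fix t assume t: "t \<in> {0..T}"
  note [measurable] = prog_D[OF assms(1) t] prog_D[OF assms(2) t]
  show "(\<lambda>p. stack (\<phi> (fst p) (snd p)) (\<psi> (fst p) (snd p))) \<in> borel_measurable (restrict_space borel {0..t} \<Otimes>\<^sub>M Fnat M W t)"
    by measurable
qed

lemma prog_vtop:
  fixes \<phi> :: "real \<Rightarrow> 'a \<Rightarrow> real^('m::finite + 'n::finite)"
  assumes "progressive M (Fnat M W) T \<phi>"
  shows "progressive M (Fnat M W) T (\<lambda>s \<omega>. vtop (\<phi> s \<omega>))" "progressive M (Fnat M W) T (\<lambda>s \<omega>. vbot (\<phi> s \<omega>))"
  unfolding prog_iff
proof -
  show "\<forall>t\<in>{0..T}. (\<lambda>p. vtop (\<phi> (fst p) (snd p))) \<in> borel_measurable (restrict_space borel {0..t} \<Otimes>\<^sub>M Fnat M W t)"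
  proof
    fix t assume t: "t \<in> {0..T}"
    note [measurable] = prog_D[OF assms(1) t]
    show "(\<lambda>p. vtop (\<phi> (fst p) (snd p))) \<in> borel_measurable (restrict_space borel {0..t} \<Otimes>\<^sub>M Fnat M W t)"
      by measurable
  qed
  show "\<forall>t\<in>{0..T}. (\<lambda>p. vbot (\<phi> (fst p) (snd p))) \<in> borel_measurable (restrict_space borel {0..t} \<Otimes>\<^sub>M Fnat M W t)"
  proof
    fix t assume t: "t \<in> {0..T}"
    note [measurable] = prog_D[OF assms(1) t]
    show "(\<lambda>p. vbot (\<phi> (fst p) (snd p))) \<in> borel_measurable (restrict_space borel {0..t} \<Otimes>\<^sub>M Fnat M W t)"
      by measurable
  qed
qed

definition PI :: "(real \<Rightarrow> 'a \<Rightarrow> 'v::real_normed_vector) \<Rightarrow> ennreal" where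
  "PI \<phi> = (\<integral>\<^sup>+p. ennreal ((norm (\<phi> (fst p) (snd p)))\<^sup>2) \<partial>(L \<Otimes>\<^sub>M M))"

lemma L2F_iff:
  fixes \<phi> :: "real \<Rightarrow> 'a \<Rightarrow> 'v::euclidean_space"
  shows "L2F M (Fnat M W) T \<phi> \<longleftrightarrow> progressive M (Fnat M W) T \<phi> \<and> PI \<phi> < \<infinity>"
proof -
  { assume p: "progressive M (Fnat M W) T \<phi>"
    note [measurable] = JM[OF p]
    have "(\<integral>\<^sup>+\<omega>. (\<integral>\<^sup>+s. ennreal ((norm (\<phi> s \<omega>))\<^sup>2) * indicator {0..T} s \<partial>lborel) \<partial>M)
        = (\<integral>\<^sup>+\<omega>. (\<integral>\<^sup>+s. ennreal ((norm (\<phi> s \<omega>))\<^sup>2) \<partial>L) \<partial>M)"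
      by (simp add: nn_integral_restrict_space)
    also have "\<dots> = PI \<phi>" unfolding PI_def
      using LM.nn_integral_snd[of "\<lambda>p. ennreal ((norm (\<phi> (fst p) (snd p)))\<^sup>2)"] by simp
    finally have "(\<integral>\<^sup>+\<omega>. (\<integral>\<^sup>+s. ennreal ((norm (\<phi> s \<omega>))\<^sup>2) * indicator {0..T} s \<partial>lborel) \<partial>M) = PI \<phi>" .
  }
  then show ?thesis unfolding L2F_def by auto
qed

lemma PI_fst:
  fixes \<phi> :: "real \<Rightarrow> 'a \<Rightarrow> 'v::euclidean_space"
  assumes "progressive M (Fnat M W) T \<phi>"
  shows "PI \<phi> = (\<integral>\<^sup>+s. (\<integral>\<^sup>+\<omega>. ennreal ((norm (\<phi> s \<omega>))\<^sup>2) \<partial>M) \<partial>L)"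
proof -
  note [measurable] = JM[OF assms]
  show ?thesis unfolding PI_def
    using sigma_finite_measure.nn_integral_fst[OF sfM, of "\<lambda>p. ennreal ((norm (\<phi> (fst p) (snd p)))\<^sup>2)" L] by simp
qed

lemma sq_tri: "(norm (a + b))\<^sup>2 \<le> 2 * (norm a)\<^sup>2 + 2 * (norm (b::'v::real_normed_vector))\<^sup>2"
  and sq_tri': "(norm (a - b))\<^sup>2 \<le> 2 * (norm a)\<^sup>2 + 2 * (norm (b::'v::real_normed_vector))\<^sup>2"
proof -
  have *: "(x + y)\<^sup>2 \<le> 2 * x\<^sup>2 + 2 * y\<^sup>2" for x y :: real
    using sum_squares_ge_zero[of "x - y" 0] by (simp add: power2_eq_square algebra_simps)
  have "(norm (a + b))\<^sup>2 \<le> (norm a + norm b)\<^sup>2" by (simp add: power_mono norm_triangle_ineq)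
  then show "(norm (a + b))\<^sup>2 \<le> 2 * (norm a)\<^sup>2 + 2 * (norm b)\<^sup>2" using *[of "norm a" "norm b"] by linarith
  have "(norm (a - b))\<^sup>2 \<le> (norm a + norm b)\<^sup>2" by (simp add: power_mono norm_triangle_ineq4)
  then show "(norm (a - b))\<^sup>2 \<le> 2 * (norm a)\<^sup>2 + 2 * (norm b)\<^sup>2" using *[of "norm a" "norm b"] by linarith
qed

lemma enn_le2: "x \<le> 2 * a + 2 * b \<Longrightarrow> 0 \<le> a \<Longrightarrow> 0 \<le> b \<Longrightarrow> ennreal x \<le> 2 * ennreal a + 2 * ennreal b"
proof -
  assume h: "x \<le> 2 * a + 2 * b" "0 \<le> a" "0 \<le> b"
  from h(1) have "ennreal x \<le> ennreal (2 * a + 2 * b)" by (rule ennreal_leI)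
  also have "\<dots> = 2 * ennreal a + 2 * ennreal b" using \<open>0 \<le> a\<close> \<open>0 \<le> b\<close>
    by (subst ennreal_plus) (auto simp: ennreal_mult)
  finally show ?thesis .
qed

lemma L2F_add:
  fixes \<phi> \<psi> :: "real \<Rightarrow> 'a \<Rightarrow> real^'n::finite"
  assumes "L2F M (Fnat M W) T \<phi>" "L2F M (Fnat M W) T \<psi>"
  shows "L2F M (Fnat M W) T (\<lambda>s \<omega>. \<phi> s \<omega> + \<psi> s \<omega>)"
proof -
  have p: "progressive M (Fnat M W) T \<phi>" "progressive M (Fnat M W) T \<psi>" and f: "PI \<phi> < \<infinity>" "PI \<psi> < \<infinity>"
    using assms by (auto simp: L2F_iff)
  note [measurable] = JM[OF p(1)] JM[OF p(2)]
  have "PI (\<lambda>s \<omega>. \<phi> s \<omega> + \<psi> s \<omega>) \<le> (\<integral>\<^sup>+p. 2 * ennreal ((norm (\<phi> (fst p) (snd p)))\<^sup>2) + 2 * ennreal ((norm (\<psi> (fst p) (snd p)))\<^sup>2) \<partial>(L \<Otimes>\<^sub>M M))"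
    unfolding PI_def by (intro nn_integral_mono enn_le2 sq_tri) auto
  also have "\<dots> = 2 * PI \<phi> + 2 * PI \<psi>" unfolding PI_def
    by (subst nn_integral_add) (auto simp: nn_integral_cmult)
  also have "\<dots> < \<infinity>" using f by (simp add: ennreal_mult_less_top)
  finally show ?thesis using prog_add[OF p] by (simp add: L2F_iff)
qed

lemma L2F_diff:
  fixes \<phi> \<psi> :: "real \<Rightarrow> 'a \<Rightarrow> real^'n::finite"
  assumes "L2F M (Fnat M W) T \<phi>" "L2F M (Fnat M W) T \<psi>"
  shows "L2F M (Fnat M W) T (\<lambda>s \<omega>. \<phi> s \<omega> - \<psi> s \<omega>)"
proof -
  have p: "progressive M (Fnat M W) T \<phi>" "progressive M (Fnat M W) T \<psi>" and f: "PI \<phi> < \<infinity>" "PI \<psi> < \<infinity>"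
    using assms by (auto simp: L2F_iff)
  note [measurable] = JM[OF p(1)] JM[OF p(2)]
  have "PI (\<lambda>s \<omega>. \<phi> s \<omega> - \<psi> s \<omega>) \<le> (\<integral>\<^sup>+p. 2 * ennreal ((norm (\<phi> (fst p) (snd p)))\<^sup>2) + 2 * ennreal ((norm (\<psi> (fst p) (snd p)))\<^sup>2) \<partial>(L \<Otimes>\<^sub>M M))"
    unfolding PI_def by (intro nn_integral_mono enn_le2 sq_tri') auto
  also have "\<dots> = 2 * PI \<phi> + 2 * PI \<psi>" unfolding PI_def
    by (subst nn_integral_add) (auto simp: nn_integral_cmult)
  also have "\<dots> < \<infinity>" using f by (simp add: ennreal_mult_less_top)
  finally show ?thesis using prog_diff[OF p] by (simp add: L2F_iff)
qed

lemma L2F_mvm: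
  fixes \<phi> :: "real \<Rightarrow> 'a \<Rightarrow> real^'m::finite" and G :: "real \<Rightarrow> real^'m^'n::finite"
  assumes G: "G \<in> borel_measurable L" and bnd: "AE s in lborel. s \<in> {0..T} \<longrightarrow> norm (G s) \<le> K"
    and "L2F M (Fnat M W) T \<phi>"
  shows "L2F M (Fnat M W) T (\<lambda>s \<omega>. G s *v \<phi> s \<omega>)"
proof -
  have p: "progressive M (Fnat M W) T \<phi>" and f: "PI \<phi> < \<infinity>" using assms by (auto simp: L2F_iff)
  note [measurable] = JM[OF p] G
  define C where "C = real CARD('n) * real CARD('m) * max K 0"
  have C: "C \<ge> 0" unfolding C_def by simp
  have "AE s in L. norm (G s) \<le> K" using bnd by (subst AE_restrict_space_iff) auto
  then have ae: "AE p in L \<Otimes>\<^sub>M M. norm (G (fst p)) \<le> K"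
    by (intro LM.AE_pair_measure) (auto simp: AE_I2)
  have "PI (\<lambda>s \<omega>. G s *v \<phi> s \<omega>) \<le> (\<integral>\<^sup>+p. ennreal (C\<^sup>2) * ennreal ((norm (\<phi> (fst p) (snd p)))\<^sup>2) \<partial>(L \<Otimes>\<^sub>M M))"
    unfolding PI_def
  proof (intro nn_integral_mono_AE, use ae in eventually_elim)
    case (elim p)
    have "norm (G (fst p) *v \<phi> (fst p) (snd p)) \<le> real CARD('n) * (real CARD('m) * (norm (G (fst p)) * norm (\<phi> (fst p) (snd p))))"
      by (rule norm_mvm_le)
    also have "\<dots> \<le> C * norm (\<phi> (fst p) (snd p))" unfolding C_def using elim
      by (auto intro!: mult_left_mono mult_right_mono)
    finally have "(norm (G (fst p) *v \<phi> (fst p) (snd p)))\<^sup>2 \<le> (C * norm (\<phi> (fst p) (snd p)))\<^sup>2"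
      by (intro power_mono) auto
    then show ?case by (simp add: ennreal_mult[symmetric] power_mult_distrib ennreal_leI C)
  qed
  also have "\<dots> = ennreal (C\<^sup>2) * PI \<phi>" unfolding PI_def by (rule nn_integral_cmult) measurable
  also have "\<dots> < \<infinity>" using f by (simp add: ennreal_mult_less_top)
  finally show ?thesis using prog_mvm[OF G p] by (simp add: L2F_iff)
qed

lemma jensen:
  fixes X :: "'a \<Rightarrow> 'v::euclidean_space"
  assumes m: "X \<in> borel_measurable M"
  shows "ennreal ((norm (LINT \<omega>|M. X \<omega>))\<^sup>2) \<le> (\<integral>\<^sup>+\<omega>. ennreal ((norm (X \<omega>))\<^sup>2) \<partial>M)"
proof (cases "(\<integral>\<^sup>+\<omega>. ennreal ((norm (X \<omega>))\<^sup>2) \<partial>M) < \<infinity>")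
  case False then show ?thesis by (simp add: not_less top_unique)
next
  case True
  note i = sq_integrable_gen[OF prob m True]
  let ?m = "LINT \<omega>|M. norm (X \<omega>)"
  have in1: "integrable M (\<lambda>\<omega>. norm (X \<omega>))" using i by auto
  have "0 \<le> LINT \<omega>|M. (norm (X \<omega>) - ?m)\<^sup>2" by simp
  also have "(LINT \<omega>|M. (norm (X \<omega>) - ?m)\<^sup>2) = (LINT \<omega>|M. (norm (X \<omega>))\<^sup>2 - 2 * ?m * norm (X \<omega>) + ?m\<^sup>2)"
    by (simp add: power2_diff algebra_simps)
  also have "\<dots> = (LINT \<omega>|M. (norm (X \<omega>))\<^sup>2) - ?m\<^sup>2"
    using i in1 by (simp add: P.prob_space power2_eq_square)
  finally have j: "?m\<^sup>2 \<le> (LINT \<omega>|M. (norm (X \<omega>))\<^sup>2)" by simp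
  have "norm (LINT \<omega>|M. X \<omega>) \<le> ?m" by (rule integral_norm_bound)
  then have "(norm (LINT \<omega>|M. X \<omega>))\<^sup>2 \<le> ?m\<^sup>2" by (intro power_mono) auto
  with j have "ennreal ((norm (LINT \<omega>|M. X \<omega>))\<^sup>2) \<le> ennreal (LINT \<omega>|M. (norm (X \<omega>))\<^sup>2)"
    by (intro ennreal_leI) linarith
  also have "\<dots> = (\<integral>\<^sup>+\<omega>. ennreal ((norm (X \<omega>))\<^sup>2) \<partial>M)"
    using i by (intro nn_integral_eq_integral[symmetric]) auto
  finally show ?thesis .
qed

lemma L2F_mexp:
  fixes \<phi> :: "real \<Rightarrow> 'a \<Rightarrow> real^'m::finite"
  assumes "L2F M (Fnat M W) T \<phi>"
  shows "L2F M (Fnat M W) T (\<lambda>s \<omega>. mexp M \<phi> s)"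
proof -
  have p: "progressive M (Fnat M W) T \<phi>" and f: "PI \<phi> < \<infinity>" using assms by (auto simp: L2F_iff)
  have pe: "progressive M (Fnat M W) T (\<lambda>s \<omega>. mexp M \<phi> s)" by (rule prog_det[OF mexp_meas[OF p]])
  have "PI (\<lambda>s \<omega>. mexp M \<phi> s) = (\<integral>\<^sup>+s. (\<integral>\<^sup>+\<omega>. ennreal ((norm (mexp M \<phi> s))\<^sup>2) \<partial>M) \<partial>L)"
    by (rule PI_fst[OF pe])
  also have "\<dots> = (\<integral>\<^sup>+s. ennreal ((norm (mexp M \<phi> s))\<^sup>2) \<partial>L)"
    by (simp add: P.emeasure_space_1)
  also have "\<dots> \<le> (\<integral>\<^sup>+s. (\<integral>\<^sup>+\<omega>. ennreal ((norm (\<phi> s \<omega>))\<^sup>2) \<partial>M) \<partial>L)"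
    unfolding mexp_def by (intro nn_integral_mono jensen sec_w[OF p]) auto
  also have "\<dots> = PI \<phi>" by (rule PI_fst[OF p, symmetric])
  finally show ?thesis using f pe by (simp add: L2F_iff)
qed

lemma L2FC_D:
  assumes "L2FC M (Fnat M W) T \<phi>"
  shows "progressive M (Fnat M W) T \<phi>" "\<And>\<omega>. \<omega> \<in> space M \<Longrightarrow> continuous_on {0..T} (\<lambda>s. \<phi> s \<omega>)"
    "(\<integral>\<^sup>+\<omega>. (SUP s\<in>{0..T}. ennreal ((norm (\<phi> s \<omega>))\<^sup>2)) \<partial>M) < \<infinity>"
  using assms unfolding L2FC_def by auto

lemma L2FC_supmeas:
  fixes \<phi> :: "real \<Rightarrow> 'a \<Rightarrow> 'v::euclidean_space"
  assumes "L2FC M (Fnat M W) T \<phi>"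
  shows "(\<lambda>\<omega>. SUP s\<in>{0..T}. ennreal ((norm (\<phi> s \<omega>))\<^sup>2)) \<in> borel_measurable M"
  using L2FC_D[OF assms] by (intro sup_meas[OF Tpos]) (auto intro: sec_w)

lemma L2FC_L2F:
  fixes \<phi> :: "real \<Rightarrow> 'a \<Rightarrow> 'v::euclidean_space"
  assumes "L2FC M (Fnat M W) T \<phi>"
  shows "L2F M (Fnat M W) T \<phi>"
proof -
  note D = L2FC_D[OF assms]
  note [measurable] = JM[OF D(1)] L2FC_supmeas[OF assms]
  have "PI \<phi> = (\<integral>\<^sup>+\<omega>. (\<integral>\<^sup>+s. ennreal ((norm (\<phi> s \<omega>))\<^sup>2) \<partial>L) \<partial>M)"
    unfolding PI_def using LM.nn_integral_snd[of "\<lambda>p. ennreal ((norm (\<phi> (fst p) (snd p)))\<^sup>2)"] by simp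
  also have "\<dots> \<le> (\<integral>\<^sup>+\<omega>. (\<integral>\<^sup>+s. (SUP s\<in>{0..T}. ennreal ((norm (\<phi> s \<omega>))\<^sup>2)) \<partial>L) \<partial>M)"
    by (intro nn_integral_mono) (auto intro: SUP_upper)
  also have "\<dots> = (\<integral>\<^sup>+\<omega>. ennreal T * (SUP s\<in>{0..T}. ennreal ((norm (\<phi> s \<omega>))\<^sup>2)) \<partial>M)"
    using emeasure_L by (simp add: mult.commute)
  also have "\<dots> = ennreal T * (\<integral>\<^sup>+\<omega>. (SUP s\<in>{0..T}. ennreal ((norm (\<phi> s \<omega>))\<^sup>2)) \<partial>M)"
    by (rule nn_integral_cmult) measurable
  also have "\<dots> < \<infinity>" using D(3) by (simp add: ennreal_mult_less_top)
  finally show ?thesis using D(1) by (simp add: L2F_iff)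
qed

lemma L2FC_int:
  fixes \<phi> :: "real \<Rightarrow> 'a \<Rightarrow> 'v::euclidean_space"
  assumes "L2FC M (Fnat M W) T \<phi>" "s \<in> {0..T}"
  shows "integrable M (\<phi> s)"
proof -
  note D = L2FC_D[OF assms(1)]
  have "(\<integral>\<^sup>+\<omega>. ennreal ((norm (\<phi> s \<omega>))\<^sup>2) \<partial>M) \<le> (\<integral>\<^sup>+\<omega>. (SUP s\<in>{0..T}. ennreal ((norm (\<phi> s \<omega>))\<^sup>2)) \<partial>M)"
    using assms(2) by (intro nn_integral_mono) (auto intro: SUP_upper)
  also have "\<dots> < \<infinity>" by (rule D(3))
  finally show ?thesis by (rule sq_integrable_gen(1)[OF prob sec_w[OF D(1) assms(2)]])
qed

lemma L2F_int:
  fixes \<phi> :: "real \<Rightarrow> 'a \<Rightarrow> 'v::euclidean_space"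
  assumes "L2F M (Fnat M W) T \<phi>"
  shows "AE s in lborel. s \<in> {0..T} \<longrightarrow> integrable M (\<phi> s)"
proof -
  have p: "progressive M (Fnat M W) T \<phi>" and f: "PI \<phi> < \<infinity>" using assms by (auto simp: L2F_iff)
  note [measurable] = JM[OF p]
  have m: "(\<lambda>s. \<integral>\<^sup>+\<omega>. ennreal ((norm (\<phi> s \<omega>))\<^sup>2) \<partial>M) \<in> borel_measurable L"
    using sigma_finite_measure.borel_measurable_nn_integral[OF sfM, of "\<lambda>s \<omega>. ennreal ((norm (\<phi> s \<omega>))\<^sup>2)" L]
    by (simp add: split_beta')
  have "AE s in L. (\<integral>\<^sup>+\<omega>. ennreal ((norm (\<phi> s \<omega>))\<^sup>2) \<partial>M) \<noteq> \<infinity>"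
    using f by (intro nn_integral_PInf_AE[OF m]) (simp add: PI_fst[OF p, symmetric])
  then have "AE s in L. integrable M (\<phi> s)"
  proof (rule AE_mp, intro AE_I2 impI)
    fix s assume s: "s \<in> space L" and fin: "(\<integral>\<^sup>+\<omega>. ennreal ((norm (\<phi> s \<omega>))\<^sup>2) \<partial>M) \<noteq> \<infinity>"
    show "integrable M (\<phi> s)"
      using s fin by (intro sq_integrable_gen(1)[OF prob sec_w[OF p]]) (auto simp: less_top)
  qed
  then show ?thesis by (subst (asm) AE_restrict_space_iff) auto
qed

lemma L2F_stack:
  fixes \<phi> :: "real \<Rightarrow> 'a \<Rightarrow> real^'m::finite" and \<psi> :: "real \<Rightarrow> 'a \<Rightarrow> real^'n::finite"
  assumes "L2F M (Fnat M W) T \<phi>" "L2F M (Fnat M W) T \<psi>"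
  shows "L2F M (Fnat M W) T (\<lambda>s \<omega>. stack (\<phi> s \<omega>) (\<psi> s \<omega>))"
proof -
  have p: "progressive M (Fnat M W) T \<phi>" "progressive M (Fnat M W) T \<psi>" and f: "PI \<phi> < \<infinity>" "PI \<psi> < \<infinity>"
    using assms by (auto simp: L2F_iff)
  note [measurable] = JM[OF p(1)] JM[OF p(2)]
  have "PI (\<lambda>s \<omega>. stack (\<phi> s \<omega>) (\<psi> s \<omega>)) = (\<integral>\<^sup>+p. ennreal ((norm (\<phi> (fst p) (snd p)))\<^sup>2) + ennreal ((norm (\<psi> (fst p) (snd p)))\<^sup>2) \<partial>(L \<Otimes>\<^sub>M M))"
    unfolding PI_def by (intro nn_integral_cong) (simp add: norm_stack_sq ennreal_plus)
  also have "\<dots> = PI \<phi> + PI \<psi>" unfolding PI_def by (subst nn_integral_add) auto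
  also have "\<dots> < \<infinity>" using f by simp
  finally show ?thesis using prog_stack[OF p] by (simp add: L2F_iff)
qed

lemma L2F_vtop:
  fixes \<phi> :: "real \<Rightarrow> 'a \<Rightarrow> real^('m::finite + 'n::finite)"
  assumes "L2F M (Fnat M W) T \<phi>"
  shows "L2F M (Fnat M W) T (\<lambda>s \<omega>. vtop (\<phi> s \<omega>))" "L2F M (Fnat M W) T (\<lambda>s \<omega>. vbot (\<phi> s \<omega>))"
proof -
  have p: "progressive M (Fnat M W) T \<phi>" and f: "PI \<phi> < \<infinity>" using assms by (auto simp: L2F_iff)
  have "PI (\<lambda>s \<omega>. vtop (\<phi> s \<omega>)) \<le> PI \<phi>" unfolding PI_def
    by (intro nn_integral_mono ennreal_leI power_mono norm_vtop_le) auto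
  then show "L2F M (Fnat M W) T (\<lambda>s \<omega>. vtop (\<phi> s \<omega>))" using f prog_vtop(1)[OF p] by (simp add: L2F_iff)
  have "PI (\<lambda>s \<omega>. vbot (\<phi> s \<omega>)) \<le> PI \<phi>" unfolding PI_def
    by (intro nn_integral_mono ennreal_leI power_mono norm_vbot_le) auto
  then show "L2F M (Fnat M W) T (\<lambda>s \<omega>. vbot (\<phi> s \<omega>))" using f prog_vtop(2)[OF p] by (simp add: L2F_iff)
qed

lemma L2FC_stack:
  fixes \<phi> :: "real \<Rightarrow> 'a \<Rightarrow> real^'m::finite" and \<psi> :: "real \<Rightarrow> 'a \<Rightarrow> real^'n::finite"
  assumes a: "L2FC M (Fnat M W) T \<phi>" and b: "L2FC M (Fnat M W) T \<psi>"
  shows "L2FC M (Fnat M W) T (\<lambda>s \<omega>. stack (\<phi> s \<omega>) (\<psi> s \<omega>))"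
proof -
  note A = L2FC_D[OF a] and B = L2FC_D[OF b]
  note [measurable] = L2FC_supmeas[OF a] L2FC_supmeas[OF b]
  have cont: "continuous_on {0..T} (\<lambda>s. stack (\<phi> s \<omega>) (\<psi> s \<omega>))" if "\<omega> \<in> space M" for \<omega>
  proof -
    have "continuous_on {0..T} (\<lambda>s. \<chi> r. (case r of Inl i \<Rightarrow> \<phi> s \<omega> $ i | Inr i \<Rightarrow> \<psi> s \<omega> $ i))"
    proof (intro continuous_on_vec_lambda)
      fix r show "continuous_on {0..T} (\<lambda>s. case r of Inl i \<Rightarrow> \<phi> s \<omega> $ i | Inr i \<Rightarrow> \<psi> s \<omega> $ i)"
        using A(2)[OF that] B(2)[OF that] by (cases r) (auto intro: continuous_intros)
    qed
    then show ?thesis by (simp add: stack_def)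
  qed
  have "(\<integral>\<^sup>+\<omega>. (SUP s\<in>{0..T}. ennreal ((norm (stack (\<phi> s \<omega>) (\<psi> s \<omega>)))\<^sup>2)) \<partial>M)
     \<le> (\<integral>\<^sup>+\<omega>. (SUP s\<in>{0..T}. ennreal ((norm (\<phi> s \<omega>))\<^sup>2)) + (SUP s\<in>{0..T}. ennreal ((norm (\<psi> s \<omega>))\<^sup>2)) \<partial>M)"
  proof (intro nn_integral_mono SUP_least)
    fix \<omega> s assume "s \<in> {0..T}"
    then show "ennreal ((norm (stack (\<phi> s \<omega>) (\<psi> s \<omega>)))\<^sup>2) \<le> (SUP s\<in>{0..T}. ennreal ((norm (\<phi> s \<omega>))\<^sup>2)) + (SUP s\<in>{0..T}. ennreal ((norm (\<psi> s \<omega>))\<^sup>2))"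
      by (simp add: norm_stack_sq ennreal_plus) (intro add_mono SUP_upper; simp)
  qed
  also have "\<dots> < \<infinity>" using A(3) B(3) by (subst nn_integral_add) auto
  finally show ?thesis using prog_stack[OF A(1) B(1)] cont unfolding L2FC_def by auto
qed

lemma L2FC_vtop:
  fixes \<phi> :: "real \<Rightarrow> 'a \<Rightarrow> real^('m::finite + 'n::finite)"
  assumes a: "L2FC M (Fnat M W) T \<phi>"
  shows "L2FC M (Fnat M W) T (\<lambda>s \<omega>. vtop (\<phi> s \<omega>))" "L2FC M (Fnat M W) T (\<lambda>s \<omega>. vbot (\<phi> s \<omega>))"
proof -
  note A = L2FC_D[OF a]
  have lin: "bounded_linear (vtop :: real^('m + 'n) \<Rightarrow> real^'m)" "bounded_linear (vbot :: real^('m + 'n) \<Rightarrow> real^'n)"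
    by (auto intro!: bounded_linear_intro[where K=1] simp: norm_vtop_le norm_vbot_le)
       (simp_all add: vtop_def vbot_def vec_eq_iff)
  have "(\<integral>\<^sup>+\<omega>. (SUP s\<in>{0..T}. ennreal ((norm (vtop (\<phi> s \<omega>)))\<^sup>2)) \<partial>M) \<le> (\<integral>\<^sup>+\<omega>. (SUP s\<in>{0..T}. ennreal ((norm (\<phi> s \<omega>))\<^sup>2)) \<partial>M)"
    by (intro nn_integral_mono SUP_mono' ennreal_leI power_mono norm_vtop_le) auto
  then show "L2FC M (Fnat M W) T (\<lambda>s \<omega>. vtop (\<phi> s \<omega>))"
    using A prog_vtop(1)[OF A(1)] unfolding L2FC_def
    by (auto intro: continuous_on_compose2[OF linear_continuous_on[OF lin(1)]] order.strict_trans1)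
  have "(\<integral>\<^sup>+\<omega>. (SUP s\<in>{0..T}. ennreal ((norm (vbot (\<phi> s \<omega>)))\<^sup>2)) \<partial>M) \<le> (\<integral>\<^sup>+\<omega>. (SUP s\<in>{0..T}. ennreal ((norm (\<phi> s \<omega>))\<^sup>2)) \<partial>M)"
    by (intro nn_integral_mono SUP_mono' ennreal_leI power_mono norm_vbot_le) auto
  then show "L2FC M (Fnat M W) T (\<lambda>s \<omega>. vbot (\<phi> s \<omega>))"
    using A prog_vtop(2)[OF A(1)] unfolding L2FC_def
    by (auto intro: continuous_on_compose2[OF linear_continuous_on[OF lin(2)]] order.strict_trans1)
qed

end


lemma stack_split: "stack a b = stack a 0 + stack 0 b"
  by (simp add: stack_def vec_eq_iff split: sum.split)

lemma norm_stack0: "norm (stack a (0::real^'b::finite)) = norm (a::real^'a::finite)"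
  "norm (stack (0::real^'a::finite) b) = norm (b::real^'b::finite)"
  using norm_stack_sq[of a "0::real^'b"] norm_stack_sq[of "0::real^'a" b]
  by (simp_all add: power2_eq_iff_nonneg)

lemma bl_stack1: "bounded_linear (\<lambda>a. stack a (0::real^'b::finite) :: real^('a::finite + 'b))"
proof (rule bounded_linear_intro[where K=1])
  show "stack (x + y) (0::real^'b) = stack x 0 + stack y 0" for x y :: "real^'a"
    by (simp add: stack_def vec_eq_iff split: sum.split)
  show "stack (r *\<^sub>R x) (0::real^'b) = r *\<^sub>R stack x 0" for r and x :: "real^'a"
    by (simp add: stack_def vec_eq_iff split: sum.split)
  show "norm (stack x (0::real^'b)) \<le> norm x * 1" for x :: "real^'a" by (simp add: norm_stack0)
qed

lemma bl_stack2: "bounded_linear (\<lambda>b. stack (0::real^'a::finite) b :: real^('a + 'b::finite))"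
proof (rule bounded_linear_intro[where K=1])
  show "stack (0::real^'a) (x + y) = stack 0 x + stack 0 y" for x y :: "real^'b"
    by (simp add: stack_def vec_eq_iff split: sum.split)
  show "stack (0::real^'a) (r *\<^sub>R x) = r *\<^sub>R stack 0 x" for r and x :: "real^'b"
    by (simp add: stack_def vec_eq_iff split: sum.split)
  show "norm (stack (0::real^'a) x) \<le> norm x * 1" for x :: "real^'b" by (simp add: norm_stack0)
qed

definition prj :: "('m::finite \<Rightarrow> 'k::finite) \<Rightarrow> real^'k \<Rightarrow> real^'m" where
  "prj g v = (\<chi> i. v $ g i)"

lemma bl_prj: "bounded_linear (prj g)"
  unfolding linear_conv_bounded_linear[symmetric]
  by (rule linearI) (simp_all add: prj_def vec_eq_iff)

lemma vtop_prj: "vtop v = prj Inl v" and vbot_prj: "vbot v = prj Inr v"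
  by (simp_all add: prj_def vtop_def vbot_def)

lemma integrable_stack:
  fixes f :: "'x \<Rightarrow> real^'a::finite" and g :: "'x \<Rightarrow> real^'b::finite"
  assumes "integrable N f" "integrable N g"
  shows "integrable N (\<lambda>x. stack (f x) (g x))"
  using integrable_bounded_linear[OF bl_stack1 assms(1)] integrable_bounded_linear[OF bl_stack2 assms(2)]
  by (subst stack_split) (rule Bochner_Integration.integrable_add)

lemma integral_stack:
  fixes f :: "'x \<Rightarrow> real^'a::finite" and g :: "'x \<Rightarrow> real^'b::finite"
  assumes "integrable N f" "integrable N g"
  shows "(LINT x|N. stack (f x) (g x)) = stack (LINT x|N. f x) (LINT x|N. g x)"
proof -
  have e: "(\<lambda>x. stack (f x) (g x)) = (\<lambda>x. stack (f x) 0 + stack 0 (g x))" by (rule ext) (rule stack_split)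
  note h = integrable_bounded_linear[OF bl_stack1 assms(1)] integrable_bounded_linear[OF bl_stack2 assms(2)]
      integral_bounded_linear[OF bl_stack1 assms(1)] integral_bounded_linear[OF bl_stack2 assms(2)]
  show ?thesis unfolding e Bochner_Integration.integral_add[OF h(1) h(2)] h(3) h(4)
    by (rule stack_split[symmetric])
qed

lemma scale_stack: "r *\<^sub>R stack a b = stack (r *\<^sub>R a) (r *\<^sub>R b)"
  by (simp add: stack_def vec_eq_iff split: sum.split)

context stc
begin

lemma ito_cong:
  assumes "ito_int M (Fnat M W) W T \<sigma> t Y"
    and eq: "AE s in lborel. s \<in> {0..T} \<longrightarrow> (\<forall>\<omega>\<in>space M. \<sigma>' s \<omega> = \<sigma> s \<omega>)"
  shows "ito_int M (Fnat M W) W T \<sigma>' t Y"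
proof -
  obtain K tp \<xi> where ok: "\<forall>k. simp_ok M (Fnat M W) T (K k) (tp k) (\<xi> k)"
    and c1: "(\<lambda>k. \<integral>\<^sup>+\<omega>. (\<integral>\<^sup>+s. ennreal ((\<sigma> s \<omega> - simp_proc (K k) (tp k) (\<xi> k) s \<omega>)\<^sup>2)
                 * indicator {0..T} s \<partial>lborel) \<partial>M) \<longlonglongrightarrow> 0"
    and c2: "(\<lambda>k. \<integral>\<^sup>+\<omega>. ennreal ((Y \<omega> - simp_int W (K k) (tp k) (\<xi> k) t \<omega>)\<^sup>2) \<partial>M) \<longlonglongrightarrow> 0"
    and m: "Y \<in> borel_measurable M"
    using assms(1) unfolding ito_int_def by blast
  have "(\<integral>\<^sup>+\<omega>. (\<integral>\<^sup>+s. ennreal ((\<sigma>' s \<omega> - simp_proc (K k) (tp k) (\<xi> k) s \<omega>)\<^sup>2) * indicator {0..T} s \<partial>lborel) \<partial>M)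
      = (\<integral>\<^sup>+\<omega>. (\<integral>\<^sup>+s. ennreal ((\<sigma> s \<omega> - simp_proc (K k) (tp k) (\<xi> k) s \<omega>)\<^sup>2) * indicator {0..T} s \<partial>lborel) \<partial>M)" for k
  proof (rule nn_integral_cong)
    fix \<omega> assume \<omega>: "\<omega> \<in> space M"
    show "(\<integral>\<^sup>+s. ennreal ((\<sigma>' s \<omega> - simp_proc (K k) (tp k) (\<xi> k) s \<omega>)\<^sup>2) * indicator {0..T} s \<partial>lborel)
       = (\<integral>\<^sup>+s. ennreal ((\<sigma> s \<omega> - simp_proc (K k) (tp k) (\<xi> k) s \<omega>)\<^sup>2) * indicator {0..T} s \<partial>lborel)"
    proof (rule nn_integral_cong_AE)
      show "AE s in lborel. ennreal ((\<sigma>' s \<omega> - simp_proc (K k) (tp k) (\<xi> k) s \<omega>)\<^sup>2) * indicator {0..T} s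
          = ennreal ((\<sigma> s \<omega> - simp_proc (K k) (tp k) (\<xi> k) s \<omega>)\<^sup>2) * indicator {0..T} s"
        using eq
      proof eventually_elim
        case (elim s)
        show ?case
        proof (cases "s \<in> {0..T}")
          case True then show ?thesis using elim \<omega> by simp
        next
          case False then show ?thesis by simp
        qed
      qed
    qed
  qed
  then show ?thesis unfolding ito_int_def using ok c1 c2 m by (intro conjI exI[of _ K] exI[of _ tp] exI[of _ \<xi>]) auto
qed

lemma vito_cong:
  assumes "vito M (Fnat M W) W T \<sigma> t Y"
    and eq: "AE s in lborel. s \<in> {0..T} \<longrightarrow> (\<forall>\<omega>\<in>space M. \<sigma>' s \<omega> = \<sigma> s \<omega>)"
  shows "vito M (Fnat M W) W T \<sigma>' t Y"
  unfolding vito_def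
proof
  fix i
  have "ito_int M (Fnat M W) W T (\<lambda>s \<omega>. \<sigma> s \<omega> $ i) t (\<lambda>\<omega>. Y \<omega> $ i)"
    using assms(1) unfolding vito_def by blast
  then show "ito_int M (Fnat M W) W T (\<lambda>s \<omega>. \<sigma>' s \<omega> $ i) t (\<lambda>\<omega>. Y \<omega> $ i)"
    by (rule ito_cong) (use eq in \<open>eventually_elim, auto\<close>)
qed

lemma vito_stack:
  assumes "vito M (Fnat M W) W T \<sigma>1 t Y1" "vito M (Fnat M W) W T \<sigma>2 t Y2"
  shows "vito M (Fnat M W) W T (\<lambda>s \<omega>. stack (\<sigma>1 s \<omega>) (\<sigma>2 s \<omega>)) t (\<lambda>\<omega>. stack (Y1 \<omega>) (Y2 \<omega>))"
  unfolding vito_def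
proof
  fix r show "ito_int M (Fnat M W) W T (\<lambda>s \<omega>. stack (\<sigma>1 s \<omega>) (\<sigma>2 s \<omega>) $ r) t (\<lambda>\<omega>. stack (Y1 \<omega>) (Y2 \<omega>) $ r)"
    using assms unfolding vito_def by (cases r) (auto simp: stack_def)
qed

lemma vito_prj:
  assumes "vito M (Fnat M W) W T \<sigma> t Y"
  shows "vito M (Fnat M W) W T (\<lambda>s \<omega>. prj g (\<sigma> s \<omega>)) t (\<lambda>\<omega>. prj g (Y \<omega>))"
  using assms unfolding vito_def prj_def by auto

lemma sde_stack:
  fixes x :: "real \<Rightarrow> 'a \<Rightarrow> real^'m::finite" and y :: "real \<Rightarrow> 'a \<Rightarrow> real^'n::finite"
  assumes sx: "sde M W T x b1 \<sigma>1" and sy: "sde M W T y b2 \<sigma>2"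
   and bm: "\<And>\<omega>. \<omega> \<in> space M \<Longrightarrow> (\<lambda>s. b s \<omega>) \<in> borel_measurable L"
   and eq: "AE s in lborel. s \<in> {0..T} \<longrightarrow> (\<forall>\<omega>\<in>space M. b s \<omega> = stack (b1 s \<omega>) (b2 s \<omega>))"
  shows "sde M W T (\<lambda>s \<omega>. stack (x s \<omega>) (y s \<omega>)) b (\<lambda>s \<omega>. stack (\<sigma>1 s \<omega>) (\<sigma>2 s \<omega>))"
  unfolding sde_def
proof
  fix t assume t: "t \<in> {0..T}"
  from sx t obtain Y1 where i1: "AE \<omega> in M. set_integrable lborel {0..t} (\<lambda>s. b1 s \<omega>)"
    and v1: "vito M (Fnat M W) W T \<sigma>1 t Y1"
    and e1: "AE \<omega> in M. x t \<omega> = x 0 \<omega> + (LINT s:{0..t}|lborel. b1 s \<omega>) + Y1 \<omega>"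
    unfolding sde_def by blast
  from sy t obtain Y2 where i2: "AE \<omega> in M. set_integrable lborel {0..t} (\<lambda>s. b2 s \<omega>)"
    and v2: "vito M (Fnat M W) W T \<sigma>2 t Y2"
    and e2: "AE \<omega> in M. y t \<omega> = y 0 \<omega> + (LINT s:{0..t}|lborel. b2 s \<omega>) + Y2 \<omega>"
    unfolding sde_def by blast
  have key: "set_integrable lborel {0..t} (\<lambda>s. b s \<omega>) \<and>
      (LINT s:{0..t}|lborel. b s \<omega>) = stack (LINT s:{0..t}|lborel. b1 s \<omega>) (LINT s:{0..t}|lborel. b2 s \<omega>)"
    if \<omega>: "\<omega> \<in> space M" and j1: "set_integrable lborel {0..t} (\<lambda>s. b1 s \<omega>)"
      and j2: "set_integrable lborel {0..t} (\<lambda>s. b2 s \<omega>)" for \<omega>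
  proof -
    have m: "(\<lambda>s. indicator {0..t} s *\<^sub>R b s \<omega>) \<in> borel_measurable lborel"
      using ind_meas[OF bm[OF \<omega>]] t by auto
    have ae: "AE s in lborel. indicator {0..t} s *\<^sub>R stack (b1 s \<omega>) (b2 s \<omega>) = indicator {0..t} s *\<^sub>R b s \<omega>"
      using eq by (rule AE_mp) (use \<omega> t in \<open>auto intro!: AE_I2 split: split_indicator\<close>)
    have int: "integrable lborel (\<lambda>s. indicator {0..t} s *\<^sub>R stack (b1 s \<omega>) (b2 s \<omega>))"
      using integrable_stack[OF j1[unfolded set_integrable_def] j2[unfolded set_integrable_def]]
      by (simp add: scale_stack)
    have "integrable lborel (\<lambda>s. indicator {0..t} s *\<^sub>R b s \<omega>)"
      by (rule integrable_cong_AE_imp[OF int m ae])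
    moreover have "(LINT s:{0..t}|lborel. b s \<omega>) = (LINT s|lborel. indicator {0..t} s *\<^sub>R stack (b1 s \<omega>) (b2 s \<omega>))"
      unfolding set_lebesgue_integral_def
      by (rule integral_cong_AE[OF m borel_measurable_integrable[OF int]]) (use ae in \<open>auto elim: AE_mp\<close>)
    moreover have "\<dots> = stack (LINT s:{0..t}|lborel. b1 s \<omega>) (LINT s:{0..t}|lborel. b2 s \<omega>)"
      unfolding set_lebesgue_integral_def
      using integral_stack[OF j1[unfolded set_integrable_def] j2[unfolded set_integrable_def]]
      by (simp add: scale_stack)
    ultimately show ?thesis unfolding set_integrable_def by simp
  qed
  show "(AE \<omega> in M. set_integrable lborel {0..t} (\<lambda>s. b s \<omega>)) \<and>
        (\<exists>Y. vito M (Fnat M W) W T (\<lambda>s \<omega>. stack (\<sigma>1 s \<omega>) (\<sigma>2 s \<omega>)) t Y \<and>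
             (AE \<omega> in M. stack (x t \<omega>) (y t \<omega>) = stack (x 0 \<omega>) (y 0 \<omega>) + (LINT s:{0..t}|lborel. b s \<omega>) + Y \<omega>))"
  proof (intro conjI exI)
    show "AE \<omega> in M. set_integrable lborel {0..t} (\<lambda>s. b s \<omega>)"
      using i1 i2 AE_space by eventually_elim (use key in blast)
    show "vito M (Fnat M W) W T (\<lambda>s \<omega>. stack (\<sigma>1 s \<omega>) (\<sigma>2 s \<omega>)) t (\<lambda>\<omega>. stack (Y1 \<omega>) (Y2 \<omega>))"
      by (rule vito_stack[OF v1 v2])
    show "AE \<omega> in M. stack (x t \<omega>) (y t \<omega>) = stack (x 0 \<omega>) (y 0 \<omega>) + (LINT s:{0..t}|lborel. b s \<omega>) + stack (Y1 \<omega>) (Y2 \<omega>)"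
      using i1 i2 e1 e2 AE_space
    proof eventually_elim
      case (elim \<omega>)
      then show ?case using key[of \<omega>] by (simp add: stack_def vec_eq_iff split: sum.split)
    qed
  qed
qed

lemma sde_prj:
  fixes Y :: "real \<Rightarrow> 'a \<Rightarrow> real^'k::finite" and g :: "'m::finite \<Rightarrow> 'k"
  assumes sY: "sde M W T Y b \<sigma>"
   and bm: "\<And>\<omega>. \<omega> \<in> space M \<Longrightarrow> (\<lambda>s. b1 s \<omega>) \<in> borel_measurable L"
   and eqb: "AE s in lborel. s \<in> {0..T} \<longrightarrow> (\<forall>\<omega>\<in>space M. b1 s \<omega> = prj g (b s \<omega>))"
   and eqs: "AE s in lborel. s \<in> {0..T} \<longrightarrow> (\<forall>\<omega>\<in>space M. \<sigma>1 s \<omega> = prj g (\<sigma> s \<omega>))"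
   and X: "\<And>s \<omega>. X s \<omega> = prj g (Y s \<omega>)"
  shows "sde M W T X b1 \<sigma>1"
  unfolding sde_def
proof
  fix t assume t: "t \<in> {0..T}"
  from sY t obtain Yi where i1: "AE \<omega> in M. set_integrable lborel {0..t} (\<lambda>s. b s \<omega>)"
    and v1: "vito M (Fnat M W) W T \<sigma> t Yi"
    and e1: "AE \<omega> in M. Y t \<omega> = Y 0 \<omega> + (LINT s:{0..t}|lborel. b s \<omega>) + Yi \<omega>"
    unfolding sde_def by blast
  note bl = bl_prj[of g]
  have key: "set_integrable lborel {0..t} (\<lambda>s. b1 s \<omega>) \<and>
      (LINT s:{0..t}|lborel. b1 s \<omega>) = prj g (LINT s:{0..t}|lborel. b s \<omega>)"
    if \<omega>: "\<omega> \<in> space M" and j1: "set_integrable lborel {0..t} (\<lambda>s. b s \<omega>)" for \<omega>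
  proof -
    have m: "(\<lambda>s. indicator {0..t} s *\<^sub>R b1 s \<omega>) \<in> borel_measurable lborel"
      using ind_meas[OF bm[OF \<omega>]] t by auto
    have ae: "AE s in lborel. prj g (indicator {0..t} s *\<^sub>R b s \<omega>) = indicator {0..t} s *\<^sub>R b1 s \<omega>"
      using eqb by (rule AE_mp) (use \<omega> t in \<open>auto intro!: AE_I2 simp: prj_def vec_eq_iff split: split_indicator\<close>)
    have int: "integrable lborel (\<lambda>s. prj g (indicator {0..t} s *\<^sub>R b s \<omega>))"
      using integrable_bounded_linear[OF bl j1[unfolded set_integrable_def]] .
    have "integrable lborel (\<lambda>s. indicator {0..t} s *\<^sub>R b1 s \<omega>)"
      by (rule integrable_cong_AE_imp[OF int m ae])
    moreover have "(LINT s:{0..t}|lborel. b1 s \<omega>) = (LINT s|lborel. prj g (indicator {0..t} s *\<^sub>R b s \<omega>))"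
      unfolding set_lebesgue_integral_def
      by (rule integral_cong_AE[OF m borel_measurable_integrable[OF int]]) (use ae in \<open>auto elim: AE_mp\<close>)
    moreover have "\<dots> = prj g (LINT s:{0..t}|lborel. b s \<omega>)"
      unfolding set_lebesgue_integral_def
      by (rule integral_bounded_linear[OF bl j1[unfolded set_integrable_def]])
    ultimately show ?thesis unfolding set_integrable_def by simp
  qed
  show "(AE \<omega> in M. set_integrable lborel {0..t} (\<lambda>s. b1 s \<omega>)) \<and>
        (\<exists>Y'. vito M (Fnat M W) W T \<sigma>1 t Y' \<and>
             (AE \<omega> in M. X t \<omega> = X 0 \<omega> + (LINT s:{0..t}|lborel. b1 s \<omega>) + Y' \<omega>))"
  proof (intro conjI exI)
    show "AE \<omega> in M. set_integrable lborel {0..t} (\<lambda>s. b1 s \<omega>)"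
      using i1 AE_space by eventually_elim (use key in blast)
    show "vito M (Fnat M W) W T \<sigma>1 t (\<lambda>\<omega>. prj g (Yi \<omega>))"
      by (rule vito_cong[OF vito_prj[OF v1]]) (use eqs in \<open>auto elim: AE_mp\<close>)
    show "AE \<omega> in M. X t \<omega> = X 0 \<omega> + (LINT s:{0..t}|lborel. b1 s \<omega>) + prj g (Yi \<omega>)"
      using i1 e1 AE_space
    proof eventually_elim
      case (elim \<omega>)
      then show ?case using key[of \<omega>] by (simp add: X prj_def vec_eq_iff)
    qed
  qed
qed

end


lemma mvm_neg: "(- A) *v x = - (A *v (x::real^'m::finite))" and mvm_neg2: "A *v (- x) = - (A *v x)"
  for A :: "real^'m::finite^'n::finite"
  by (simp_all add: matrix_vector_mult_def vec_eq_iff sum_negf)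

lemma mvm_zero: "(0::real^'m::finite^'n::finite) *v x = 0"
  by (simp add: matrix_vector_mult_def vec_eq_iff)

lemma sum_UNIV_sum: "(\<Sum>r\<in>(UNIV::('a::finite+'b::finite) set). f r) = (\<Sum>i\<in>UNIV. f (Inl i)) + (\<Sum>j\<in>UNIV. f (Inr j))"
  using sum.Plus[of "UNIV::'a set" "UNIV::'b set" f] by (simp add: o_def)

lemma blk2_mvm: "vtop (blk2 P Q R S *v stack a b) = P *v a + Q *v b"
  "vbot (blk2 P Q R S *v stack a b) = R *v a + S *v b"
  by (simp_all add: blk2_def vtop_def vbot_def stack_def matrix_vector_mult_def vec_eq_iff sum_UNIV_sum)

lemma vstack_mvm: "vtop (vstack P Q *v v) = P *v v" "vbot (vstack P Q *v v) = Q *v v"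
  by (simp_all add: vstack_def vtop_def vbot_def matrix_vector_mult_def vec_eq_iff)

lemma vtop_add: "vtop (a + b) = vtop a + vtop b" and vbot_add: "vbot (a + b) = vbot a + vbot b"
  by (simp_all add: vtop_def vbot_def vec_eq_iff)

lemmas mvnorm = matrix_vector_mul_assoc[symmetric] matrix_vector_mult_add_rdistrib
  matrix_vector_mult_diff_rdistrib matrix_vector_right_distrib matrix_vector_mult_diff_distrib
  mvm_neg mvm_neg2 matrix_vector_mul_lid mvm_zero vtop_add vbot_add blk2_mvm vstack_mvm

lemma alg_top1:
  assumes q: "q = cC c s *v (x - ex) + Dy c s *v (y - ey) + Dz c s *v (z - ez) + cD0 c s *v (u - eu)
      + Ch c s *v ex + Dyh c s *v ey + Dzh c s *v ez + D0h c s *v eu"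
  and eq: "eq = Ch c s *v ex + Dyh c s *v ey + Dzh c s *v ez + D0h c s *v eu"
  shows "vtop (bA c s *v stack x y + bAb c s *v stack ex ey + bC c s *v stack q z + bCb c s *v stack eq ez
      + bB c s *v u + bBb c s *v eu)
   = cA c s *v x + cAb c s *v ex + By c s *v y + Byb c s *v ey + Bz c s *v z + Bzb c s *v ez
      + cB0 c s *v u + cB0b c s *v eu"
  unfolding q eq bA_def bAb_def bC_def bCb_def bB_def bBb_def A1_def A1h_def A2_def A2h_def C1_def C1h_def
    C2_def C2h_def B1_def B1h_def Ah_def Ch_def B0h_def Byh_def Bzh_def Dyh_def Dzh_def
  by (simp only: mvnorm) (simp add: algebra_simps)

lemma alg_bot:
  shows "vbot (bA c s *v stack x y + bAb c s *v stack ex ey + bC c s *v stack q z + bCb c s *v stack eq ez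
      + bB c s *v u + bBb c s *v eu)
   = - (cQ c s *v x + cQb c s *v ex + transpose (cdiag (cA c s)) *v y + transpose (cdiag (cAb c s)) *v ey
      + transpose (cdiag (cC c s)) *v z + transpose (cdiag (cCb c s)) *v ez)"
  unfolding bA_def bAb_def bC_def bCb_def bB_def bBb_def
  by (simp only: mvnorm) (simp add: algebra_simps)

lemma alg_top2:
  assumes u: "u = (transpose (cD0 c s) ** invDD c s) *v ((q - eq) - cC c s *v (x - ex) - Dy c s *v (y - ey) - Dz c s *v (z - ez))
      + (mat 1 - transpose (cD0 c s) ** invDD c s ** cD0 c s) *v (vv - evv)
      + (transpose (D0h c s) ** invDDh c s) *v (eq - Ch c s *v ex - Dyh c s *v ey - Dzh c s *v ez)
      + (mat 1 - transpose (D0h c s) ** invDDh c s ** D0h c s) *v evv"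
  and eu: "eu = (transpose (D0h c s) ** invDDh c s) *v (eq - Ch c s *v ex - Dyh c s *v ey - Dzh c s *v ez)
      + (mat 1 - transpose (D0h c s) ** invDDh c s ** D0h c s) *v evv"
  shows "cA c s *v x + cAb c s *v ex + By c s *v y + Byb c s *v ey + Bz c s *v z + Bzb c s *v ez
      + cB0 c s *v u + cB0b c s *v eu
   = vtop (bA c s *v stack x y + bAb c s *v stack ex ey + bC c s *v stack q z + bCb c s *v stack eq ez
      + bB c s *v vv + bBb c s *v evv)"
  unfolding u eu bA_def bAb_def bC_def bCb_def bB_def bBb_def A1_def A1h_def A2_def A2h_def C1_def C1h_def
    C2_def C2h_def B1_def B1h_def Ah_def Ch_def B0h_def Byh_def Bzh_def Dyh_def Dzh_def
  by (simp only: mvnorm) (simp add: algebra_simps)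

lemma alg_diff2:
  assumes u: "u = (transpose (cD0 c s) ** invDD c s) *v ((q - eq) - cC c s *v (x - ex) - Dy c s *v (y - ey) - Dz c s *v (z - ez))
      + (mat 1 - transpose (cD0 c s) ** invDD c s ** cD0 c s) *v (vv - evv)
      + (transpose (D0h c s) ** invDDh c s) *v (eq - Ch c s *v ex - Dyh c s *v ey - Dzh c s *v ez)
      + (mat 1 - transpose (D0h c s) ** invDDh c s ** D0h c s) *v evv"
  and eu: "eu = (transpose (D0h c s) ** invDDh c s) *v (eq - Ch c s *v ex - Dyh c s *v ey - Dzh c s *v ez)
      + (mat 1 - transpose (D0h c s) ** invDDh c s ** D0h c s) *v evv"
  and i1: "cD0 c s ** transpose (cD0 c s) ** invDD c s = mat 1"
  and i2: "D0h c s ** transpose (D0h c s) ** invDDh c s = mat 1"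
  shows "cC c s *v x + cCb c s *v ex + Dy c s *v y + Dyb c s *v ey + Dz c s *v z + Dzb c s *v ez
      + cD0 c s *v u + cD0b c s *v eu = q"
proof -
  define w where "w = (q - eq) - cC c s *v (x - ex) - Dy c s *v (y - ey) - Dz c s *v (z - ez)"
  define wh where "wh = eq - Ch c s *v ex - Dyh c s *v ey - Dzh c s *v ez"
  define K where "K = transpose (cD0 c s) ** invDD c s"
  define Kh where "Kh = transpose (D0h c s) ** invDDh c s"
  have r1: "cD0 c s *v (K *v w') = w'" for w'
    using i1 unfolding K_def by (simp add: matrix_vector_mul_assoc matrix_mul_assoc)
  have r2: "D0h c s *v (Kh *v w') = w'" for w'
    using i2 unfolding Kh_def by (simp add: matrix_vector_mul_assoc matrix_mul_assoc)
  have p1: "cD0 c s *v ((mat 1 - K ** cD0 c s) *v w') = 0" for w'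
    by (simp add: matrix_vector_mult_diff_rdistrib matrix_vector_mult_diff_distrib matrix_vector_mul_assoc[symmetric] r1)
  have p2: "D0h c s *v ((mat 1 - Kh ** D0h c s) *v w') = 0" for w'
    by (simp add: matrix_vector_mult_diff_rdistrib matrix_vector_mult_diff_distrib matrix_vector_mul_assoc[symmetric] r2)
  have ue: "u = K *v w + (mat 1 - K ** cD0 c s) *v (vv - evv) + eu"
    unfolding u eu w_def K_def Kh_def by (simp add: algebra_simps)
  have eu': "eu = Kh *v wh + (mat 1 - Kh ** D0h c s) *v evv" unfolding eu wh_def Kh_def by simp
  have "cD0 c s *v u + cD0b c s *v eu = cD0 c s *v (K *v w) + cD0 c s *v ((mat 1 - K ** cD0 c s) *v (vv - evv)) + D0h c s *v eu"
    unfolding ue D0h_def by (simp add: matrix_vector_right_distrib matrix_vector_mult_add_rdistrib algebra_simps)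
  also have "\<dots> = w + wh"
    unfolding eu' by (simp add: r1 p1 r2 p2 matrix_vector_right_distrib)
  finally have "cD0 c s *v u + cD0b c s *v eu = w + wh" .
  then show ?thesis
    unfolding w_def wh_def Ch_def Dyh_def Dzh_def
    by (simp add: matrix_vector_mult_add_rdistrib matrix_vector_mult_diff_distrib algebra_simps)
qed


lemma mat_entry_col: "(B::real^'n::finite^'m::finite) $ i $ k = (B *v axis k 1) $ i"
  by (simp add: matrix_vector_mult_def axis_def if_distrib cong: if_cong)

lemma inv_bound:
  fixes P :: "real^'n::finite^'n"
  assumes d: "\<delta> > 0" and q: "\<forall>\<xi>. \<delta> * (\<xi> \<bullet> \<xi>) \<le> \<xi> \<bullet> (P *v \<xi>)"
  shows "invertible P" "norm (matrix_inv P) \<le> real CARD('n) * (real CARD('n) * (1/\<delta>))"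
proof -
  have inj: "inj ((*v) P)"
  proof (rule injI)
    fix a b assume "P *v a = P *v b"
    then have "P *v (a - b) = 0" by (simp add: matrix_vector_mult_diff_distrib)
    then have "\<delta> * ((a - b) \<bullet> (a - b)) \<le> 0" using q[rule_format, of "a - b"] by simp
    then have "(a - b) \<bullet> (a - b) \<le> 0" using d by (simp add: mult_le_0_iff)
    then have "(a - b) \<bullet> (a - b) = 0" using inner_ge_zero[of "a - b"] by linarith
    then show "a = b" by simp
  qed
  obtain B where "B ** P = mat 1" using matrix_left_invertible_injective[of P] inj by blast
  then have "P ** B = mat 1" using matrix_left_right_inverse by blast
  with \<open>B ** P = mat 1\<close> show inv: "invertible P" unfolding invertible_def by blast
  show "norm (matrix_inv P) \<le> real CARD('n) * (real CARD('n) * (1/\<delta>))"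
  proof (rule norm_mat_by_entries)
    fix i j
    define w where "w = matrix_inv P *v axis j 1"
    have Pw: "P *v w = axis j 1" unfolding w_def
      by (simp add: matrix_vector_mul_assoc matrix_inv_right(1)[OF inv])
    have "\<delta> * (norm w)\<^sup>2 \<le> w \<bullet> axis j 1" using q[rule_format, of w] Pw by (simp add: dot_square_norm)
    also have "\<dots> \<le> norm w * norm (axis j (1::real))" by (rule norm_cauchy_schwarz)
    finally have h: "\<delta> * (norm w)\<^sup>2 \<le> norm w" by simp
    have nw: "norm w \<le> 1/\<delta>"
    proof (cases "norm w = 0")
      case False
      then have "\<delta> * norm w \<le> 1" using h by (simp add: power2_eq_square)
      then show ?thesis using d by (simp add: field_simps)
    qed (use d in simp)
    have "\<bar>matrix_inv P $ i $ j\<bar> = \<bar>w $ i\<bar>" unfolding w_def by (simp add: mat_entry_col[of _ i j])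
    also have "\<dots> \<le> norm w" by (rule component_le_norm_cart)
    finally show "\<bar>matrix_inv P $ i $ j\<bar> \<le> 1/\<delta>" using nw by linarith
  qed
qed

locale ctx = stc M W T for M :: "'a measure" and W T +
  fixes c :: "('n::finite, 'k::finite, 'm::finite, 'p::finite) coef"
  assumes cok: "coef_ok c T"
    and Rb1: "bounded ((\<lambda>s. matrix_inv (cR c s)) ` {0..T})"
    and Rb2: "bounded ((\<lambda>s. matrix_inv (cR c s + cRb c s)) ` {0..T})"
    and dl: "\<exists>\<delta>>0. AE s in lborel. s \<in> {0..T} \<longrightarrow>
           (\<forall>\<xi>. \<delta> * (\<xi> \<bullet> \<xi>) \<le> \<xi> \<bullet> ((cD0 c s ** transpose (cD0 c s)) *v \<xi>)) \<and>
           (\<forall>\<xi>. \<delta> * (\<xi> \<bullet> \<xi>) \<le> \<xi> \<bullet> ((D0h c s ** transpose (D0h c s)) *v \<xi>))"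
begin

lemma linf_L: "linf T f \<Longrightarrow> f \<in> borel_measurable L"
  unfolding linf_def by (auto intro: meas_RT_L)

lemma cmeas[measurable]:
  "cA c \<in> borel_measurable L" "cAb c \<in> borel_measurable L" "cC c \<in> borel_measurable L" "cCb c \<in> borel_measurable L"
  "cB0 c \<in> borel_measurable L" "cB0b c \<in> borel_measurable L" "cD0 c \<in> borel_measurable L" "cD0b c \<in> borel_measurable L"
  "cBm c \<in> borel_measurable L" "cBmb c \<in> borel_measurable L" "cDm c \<in> borel_measurable L" "cDmb c \<in> borel_measurable L"
  "cR c \<in> borel_measurable L" "cRb c \<in> borel_measurable L" "cQ c \<in> borel_measurable L" "cQb c \<in> borel_measurable L"
  using cok unfolding coef_ok_def by (auto intro: linf_L)

definition gb :: "(real \<Rightarrow> real^'b::finite^'d::finite) \<Rightarrow> bool" where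
  "gb G \<longleftrightarrow> G \<in> borel_measurable L \<and> (\<exists>K. AE s in lborel. s \<in> {0..T} \<longrightarrow> norm (G s) \<le> K)"

lemma gb_I2:
  assumes "gb F" "gb G" "H \<in> borel_measurable L"
    and b: "\<And>s K1 K2. norm (F s) \<le> K1 \<Longrightarrow> norm (G s) \<le> K2 \<Longrightarrow> norm (H s) \<le> f K1 K2"
  shows "gb H"
proof -
  obtain K1 K2 where a: "AE s in lborel. s \<in> {0..T} \<longrightarrow> norm (F s) \<le> K1" "AE s in lborel. s \<in> {0..T} \<longrightarrow> norm (G s) \<le> K2"
    using assms(1,2) unfolding gb_def by blast
  have "AE s in lborel. s \<in> {0..T} \<longrightarrow> norm (H s) \<le> f K1 K2"
    using a by eventually_elim (blast intro: b)
  then show ?thesis using assms(3) unfolding gb_def by blast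
qed

lemma gb_I1:
  assumes "gb F" "H \<in> borel_measurable L"
    and b: "\<And>s K1. norm (F s) \<le> K1 \<Longrightarrow> norm (H s) \<le> f K1"
  shows "gb H"
  by (rule gb_I2[OF assms(1) assms(1) assms(2), of "\<lambda>K1 K2. f K1"]) (rule b)

lemma gb_meas: "gb F \<Longrightarrow> F \<in> borel_measurable L" unfolding gb_def by blast

lemma gb_add: "gb F \<Longrightarrow> gb G \<Longrightarrow> gb (\<lambda>s. F s + G s)"
proof (rule gb_I2[where f="\<lambda>K1 K2. K1 + K2"])
  assume [measurable]: "gb F" "gb G"
  note [measurable] = gb_meas[OF this(1)] gb_meas[OF this(2)]
  show "(\<lambda>s. F s + G s) \<in> borel_measurable L" by measurable
  fix s K1 K2 assume "norm (F s) \<le> K1" "norm (G s) \<le> K2"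
  then show "norm (F s + G s) \<le> K1 + K2" using norm_triangle_ineq[of "F s" "G s"] by linarith
qed

lemma gb_diff: "gb F \<Longrightarrow> gb G \<Longrightarrow> gb (\<lambda>s. F s - G s)"
proof (rule gb_I2[where f="\<lambda>K1 K2. K1 + K2"])
  assume [measurable]: "gb F" "gb G"
  note [measurable] = gb_meas[OF this(1)] gb_meas[OF this(2)]
  show "(\<lambda>s. F s - G s) \<in> borel_measurable L" by measurable
  fix s K1 K2 assume "norm (F s) \<le> K1" "norm (G s) \<le> K2"
  then show "norm (F s - G s) \<le> K1 + K2" using norm_triangle_ineq4[of "F s" "G s"] by linarith
qed

lemma gb_uminus: "gb F \<Longrightarrow> gb (\<lambda>s. - F s)"
proof (rule gb_I1[where f="\<lambda>K1. K1"])
  assume "gb F"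
  note [measurable] = gb_meas[OF this]
  show "(\<lambda>s. - F s) \<in> borel_measurable L" by measurable
  fix s K1 assume "norm (F s) \<le> K1"
  then show "norm (- F s) \<le> K1" by (simp only: norm_minus_cancel)
qed

lemma gb_const: "gb (\<lambda>s. C)"
  unfolding gb_def by (auto intro!: exI[of _ "norm C"])

lemma gb_mm:
  fixes F :: "real \<Rightarrow> real^'r2::finite^'r1::finite" and G :: "real \<Rightarrow> real^'r3::finite^'r2"
  shows "gb F \<Longrightarrow> gb G \<Longrightarrow> gb (\<lambda>s. F s ** G s)"
proof (rule gb_I2[where f="\<lambda>K1 K2. real CARD('r1) * (real CARD('r3) * real CARD('r2)) * (max K1 0 * max K2 0)"])
  assume "gb F" "gb G"
  note [measurable] = gb_meas[OF this(1)] gb_meas[OF this(2)]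
  show "(\<lambda>s. F s ** G s) \<in> borel_measurable L" by measurable
  fix s K1 K2 assume k: "norm (F s) \<le> K1" "norm (G s) \<le> K2"
  have "norm (F s ** G s) \<le> real CARD('r1) * (real CARD('r3) * real CARD('r2)) * (norm (F s) * norm (G s))"
    using norm_mm_le[of "F s" "G s"] by (simp add: mult_ac)
  also have "\<dots> \<le> real CARD('r1) * (real CARD('r3) * real CARD('r2)) * (max K1 0 * max K2 0)"
    using k by (intro mult_left_mono mult_mono) auto
  finally show "norm (F s ** G s) \<le> real CARD('r1) * (real CARD('r3) * real CARD('r2)) * (max K1 0 * max K2 0)" .
qed

lemma gb_tr:
  fixes F :: "real \<Rightarrow> real^'r2::finite^'r1::finite"
  shows "gb F \<Longrightarrow> gb (\<lambda>s. transpose (F s))"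
proof (rule gb_I1[where f="\<lambda>K1. real CARD('r2) * (real CARD('r1) * K1)"])
  assume "gb F"
  note [measurable] = gb_meas[OF this]
  show "(\<lambda>s. transpose (F s)) \<in> borel_measurable L" by measurable
  fix s K1 assume "norm (F s) \<le> K1"
  then show "norm (transpose (F s)) \<le> real CARD('r2) * (real CARD('r1) * K1)"
    using norm_transpose_le[of "F s"] by (meson mult_left_mono of_nat_0_le_iff order_trans)
qed

lemma gb_bdiag:
  fixes F :: "real \<Rightarrow> real^'r2::finite^'r1::finite" and own :: "'r2 \<Rightarrow> 'r3::finite"
  shows "gb F \<Longrightarrow> gb (\<lambda>s. bdiag own (F s))"
proof (rule gb_I1[where f="\<lambda>K1. real CARD('r3 \<times> 'r1) * (real CARD('r2) * K1)"])
  assume "gb F"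
  note [measurable] = gb_meas[OF this]
  show "(\<lambda>s. bdiag own (F s)) \<in> borel_measurable L" by measurable
  fix s K1 assume "norm (F s) \<le> K1"
  then show "norm (bdiag own (F s)) \<le> real CARD('r3 \<times> 'r1) * (real CARD('r2) * K1)"
    using norm_bdiag_le[of own "F s"] by (meson mult_left_mono of_nat_0_le_iff order_trans)
qed

lemma gb_evb: "F \<in> borel_measurable L \<Longrightarrow> bounded (F ` {0..T}) \<Longrightarrow> gb F"
  unfolding gb_def bounded_iff by (blast intro: AE_I2)

lemma gb_linf: "linf T F \<Longrightarrow> gb F"
  by (rule gb_evb) (auto simp: linf_def intro: linf_L)

lemma L2F_mvm_gb:
  fixes \<phi> :: "real \<Rightarrow> 'a \<Rightarrow> real^'b::finite" and G :: "real \<Rightarrow> real^'b^'d::finite"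
  shows "gb G \<Longrightarrow> L2F M (Fnat M W) T \<phi> \<Longrightarrow> L2F M (Fnat M W) T (\<lambda>s \<omega>. G s *v \<phi> s \<omega>)"
  unfolding gb_def by (blast intro: L2F_mvm)


lemma gb_base:
  "gb (cA c)" "gb (cAb c)" "gb (cC c)" "gb (cCb c)" "gb (cB0 c)" "gb (cB0b c)" "gb (cD0 c)" "gb (cD0b c)"
  "gb (cBm c)" "gb (cBmb c)" "gb (cDm c)" "gb (cDmb c)" "gb (cR c)" "gb (cRb c)" "gb (cQ c)" "gb (cQb c)"
  using cok unfolding coef_ok_def by (auto intro: gb_linf)

lemma gb_Rinv: "gb (\<lambda>s. matrix_inv (cR c s))" "gb (\<lambda>s. matrix_inv (cR c s + cRb c s))"
  by (rule gb_evb, measurable, rule Rb1) (rule gb_evb, measurable, rule Rb2)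

lemmas gb_intros = gb_add gb_diff gb_uminus gb_mm gb_tr gb_bdiag gb_const gb_base gb_Rinv

lemma gb_coefs:
  "gb (\<lambda>s. By c s)" "gb (\<lambda>s. Byb c s)" "gb (\<lambda>s. Bz c s)" "gb (\<lambda>s. Bzb c s)"
  "gb (\<lambda>s. Dy c s)" "gb (\<lambda>s. Dyb c s)" "gb (\<lambda>s. Dz c s)" "gb (\<lambda>s. Dzb c s)"
  "gb (\<lambda>s. Ch c s)" "gb (\<lambda>s. Dyh c s)" "gb (\<lambda>s. Dzh c s)" "gb (\<lambda>s. D0h c s)"
  unfolding By_def Byb_def Bz_def Bzb_def Dy_def Dyb_def Dz_def Dzb_def Ch_def Dyh_def Dzh_def D0h_def
    cm_def cmb_def
  by (intro gb_intros)+

lemma meas_coefs[measurable]: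
  "By c \<in> borel_measurable L" "Byb c \<in> borel_measurable L" "Bz c \<in> borel_measurable L" "Bzb c \<in> borel_measurable L"
  "Dy c \<in> borel_measurable L" "Dyb c \<in> borel_measurable L" "Dz c \<in> borel_measurable L" "Dzb c \<in> borel_measurable L"
  "Ch c \<in> borel_measurable L" "Dyh c \<in> borel_measurable L" "Dzh c \<in> borel_measurable L" "D0h c \<in> borel_measurable L"
  using gb_coefs by (auto dest: gb_meas simp: eta_contract_eq)

lemma meas_coefs2[measurable]:
  "Ah c \<in> borel_measurable L" "B0h c \<in> borel_measurable L" "Byh c \<in> borel_measurable L" "Bzh c \<in> borel_measurable L"
  "invDD c \<in> borel_measurable L" "invDDh c \<in> borel_measurable L"
proof -
  have [measurable]: "(\<lambda>s. Ah c s) \<in> borel_measurable L" "(\<lambda>s. B0h c s) \<in> borel_measurable L"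
    "(\<lambda>s. Byh c s) \<in> borel_measurable L" "(\<lambda>s. Bzh c s) \<in> borel_measurable L"
    "(\<lambda>s. invDD c s) \<in> borel_measurable L" "(\<lambda>s. invDDh c s) \<in> borel_measurable L"
    unfolding Ah_def B0h_def Byh_def Bzh_def invDD_def invDDh_def by measurable
  then show "Ah c \<in> borel_measurable L" "B0h c \<in> borel_measurable L" "Byh c \<in> borel_measurable L"
    "Bzh c \<in> borel_measurable L" "invDD c \<in> borel_measurable L" "invDDh c \<in> borel_measurable L"
    by simp_all
qed

lemma meas_coefs3[measurable]:
  "A1 c \<in> borel_measurable L" "A1h c \<in> borel_measurable L" "A2 c \<in> borel_measurable L" "A2h c \<in> borel_measurable L"
  "C1 c \<in> borel_measurable L" "C1h c \<in> borel_measurable L" "C2 c \<in> borel_measurable L" "C2h c \<in> borel_measurable L"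
  "B1 c \<in> borel_measurable L" "B1h c \<in> borel_measurable L"
proof -
  have "(\<lambda>s. A1 c s) \<in> borel_measurable L" "(\<lambda>s. A1h c s) \<in> borel_measurable L"
    "(\<lambda>s. A2 c s) \<in> borel_measurable L" "(\<lambda>s. A2h c s) \<in> borel_measurable L"
    "(\<lambda>s. C1 c s) \<in> borel_measurable L" "(\<lambda>s. C1h c s) \<in> borel_measurable L"
    "(\<lambda>s. C2 c s) \<in> borel_measurable L" "(\<lambda>s. C2h c s) \<in> borel_measurable L"
    "(\<lambda>s. B1 c s) \<in> borel_measurable L" "(\<lambda>s. B1h c s) \<in> borel_measurable L"
    unfolding A1_def A1h_def A2_def A2h_def C1_def C1h_def C2_def C2h_def B1_def B1h_def by measurable
  then show "A1 c \<in> borel_measurable L" "A1h c \<in> borel_measurable L" "A2 c \<in> borel_measurable L" "A2h c \<in> borel_measurable L"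
    "C1 c \<in> borel_measurable L" "C1h c \<in> borel_measurable L" "C2 c \<in> borel_measurable L" "C2h c \<in> borel_measurable L"
    "B1 c \<in> borel_measurable L" "B1h c \<in> borel_measurable L" by simp_all
qed

lemma meas_coefs4[measurable]:
  "bA c \<in> borel_measurable L" "bAb c \<in> borel_measurable L" "bC c \<in> borel_measurable L" "bCb c \<in> borel_measurable L"
  "bB c \<in> borel_measurable L" "bBb c \<in> borel_measurable L"
proof -
  have "(\<lambda>s. bA c s) \<in> borel_measurable L" "(\<lambda>s. bAb c s) \<in> borel_measurable L"
    "(\<lambda>s. bC c s) \<in> borel_measurable L" "(\<lambda>s. bCb c s) \<in> borel_measurable L"
    "(\<lambda>s. bB c s) \<in> borel_measurable L" "(\<lambda>s. bBb c s) \<in> borel_measurable L"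
    unfolding bA_def bAb_def bC_def bCb_def bB_def bBb_def by measurable
  then show "bA c \<in> borel_measurable L" "bAb c \<in> borel_measurable L" "bC c \<in> borel_measurable L" "bCb c \<in> borel_measurable L"
    "bB c \<in> borel_measurable L" "bBb c \<in> borel_measurable L" by simp_all
qed

lemma good: "\<exists>B. AE s in lborel. s \<in> {0..T} \<longrightarrow>
   cD0 c s ** transpose (cD0 c s) ** invDD c s = mat 1 \<and> D0h c s ** transpose (D0h c s) ** invDDh c s = mat 1 \<and>
   norm (invDD c s) \<le> B \<and> norm (invDDh c s) \<le> B"
proof -
  obtain \<delta> where d: "\<delta> > 0" and ae: "AE s in lborel. s \<in> {0..T} \<longrightarrow>
           (\<forall>\<xi>. \<delta> * (\<xi> \<bullet> \<xi>) \<le> \<xi> \<bullet> ((cD0 c s ** transpose (cD0 c s)) *v \<xi>)) \<and>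
           (\<forall>\<xi>. \<delta> * (\<xi> \<bullet> \<xi>) \<le> \<xi> \<bullet> ((D0h c s ** transpose (D0h c s)) *v \<xi>))"
    using dl by blast
  show ?thesis
  proof (intro exI)
    show "AE s in lborel. s \<in> {0..T} \<longrightarrow>
      cD0 c s ** transpose (cD0 c s) ** invDD c s = mat 1 \<and> D0h c s ** transpose (D0h c s) ** invDDh c s = mat 1 \<and>
      norm (invDD c s) \<le> real CARD('n) * (real CARD('n) * (1/\<delta>)) \<and> norm (invDDh c s) \<le> real CARD('n) * (real CARD('n) * (1/\<delta>))"
      using ae
    proof eventually_elim
      case (elim s)
      show ?case
      proof
        assume s: "s \<in> {0..T}"
        note b1 = inv_bound[OF d, of "cD0 c s ** transpose (cD0 c s)"] and b2 = inv_bound[OF d, of "D0h c s ** transpose (D0h c s)"]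
        show "cD0 c s ** transpose (cD0 c s) ** invDD c s = mat 1 \<and> D0h c s ** transpose (D0h c s) ** invDDh c s = mat 1 \<and>
          norm (invDD c s) \<le> real CARD('n) * (real CARD('n) * (1/\<delta>)) \<and> norm (invDDh c s) \<le> real CARD('n) * (real CARD('n) * (1/\<delta>))"
          using b1 b2 elim s matrix_inv_right(1) unfolding invDD_def invDDh_def by auto
      qed
    qed
  qed
qed

lemma gb_inv: "gb (\<lambda>s. invDD c s)" "gb (\<lambda>s. invDDh c s)"
proof -
  obtain B where ae: "AE s in lborel. s \<in> {0..T} \<longrightarrow>
   cD0 c s ** transpose (cD0 c s) ** invDD c s = mat 1 \<and> D0h c s ** transpose (D0h c s) ** invDDh c s = mat 1 \<and>
   norm (invDD c s) \<le> B \<and> norm (invDDh c s) \<le> B" using good by blast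
  have "AE s in lborel. s \<in> {0..T} \<longrightarrow> norm (invDD c s) \<le> B" "AE s in lborel. s \<in> {0..T} \<longrightarrow> norm (invDDh c s) \<le> B"
    using ae by (eventually_elim, blast)+
  moreover have "(\<lambda>s. invDD c s) \<in> borel_measurable L" "(\<lambda>s. invDDh c s) \<in> borel_measurable L" by measurable
  ultimately show "gb (\<lambda>s. invDD c s)" "gb (\<lambda>s. invDDh c s)" unfolding gb_def by blast+
qed

lemma gb_G:
  "gb (\<lambda>s. transpose (cD0 c s) ** invDD c s)" "gb (\<lambda>s. mat 1 - transpose (cD0 c s) ** invDD c s ** cD0 c s)"
  "gb (\<lambda>s. transpose (D0h c s) ** invDDh c s)" "gb (\<lambda>s. mat 1 - transpose (D0h c s) ** invDDh c s ** D0h c s)"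
  by (intro gb_intros gb_inv gb_coefs)+

end


lemma int_mvm: "integrable N f \<Longrightarrow> (LINT \<omega>|N. (A::real^'m::finite^'n::finite) *v f \<omega>) = A *v (LINT \<omega>|N. f \<omega>)"
  by (rule integral_bounded_linear[OF matrix_vector_mul_bounded_linear])

lemma integrable_mvm: "integrable N f \<Longrightarrow> integrable N (\<lambda>\<omega>. (A::real^'m::finite^'n::finite) *v f \<omega>)"
  by (rule integrable_bounded_linear[OF matrix_vector_mul_bounded_linear])

lemma bl_vtop: "bounded_linear vtop" "bounded_linear vbot"
  using bl_prj[of Inl] bl_prj[of Inr] by (simp_all add: vtop_prj[abs_def] vbot_prj[abs_def])

context ctx
begin

lemma int_const[simp]: "(LINT \<omega>|M. cc) = (cc::'b::{banach, second_countable_topology})"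
  using lebesgue_integral_const[of M cc] P.prob_space by simp

lemmas int_simps = Bochner_Integration.integral_add Bochner_Integration.integral_diff int_mvm int_const
  Bochner_Integration.integrable_add Bochner_Integration.integrable_diff integrable_mvm P.integrable_const P.prob_space

lemma part1:
  fixes u :: "real \<Rightarrow> 'a \<Rightarrow> real^'k" and x :: "real \<Rightarrow> 'a \<Rightarrow> real^'n"
    and y z :: "real \<Rightarrow> 'a \<Rightarrow> real^('p \<times> 'n)"
  assumes hu: "L2F M (Fnat M W) T u" and hx: "L2FC M (Fnat M W) T x" and hy: "L2FC M (Fnat M W) T y"
    and hz: "L2F M (Fnat M W) T z" and hm: "mfgbcs c M W T u x y z"
  shows "L2F M (Fnat M W) T u \<and> L2FC M (Fnat M W) T (\<lambda>s \<omega>. stack (x s \<omega>) (y s \<omega>))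
    \<and> L2F M (Fnat M W) T (\<lambda>s \<omega>. stack (qfrom c M u x y z s \<omega>) (z s \<omega>))
    \<and> bwd c M W T u (\<lambda>s \<omega>. stack (x s \<omega>) (y s \<omega>)) (\<lambda>s \<omega>. stack (qfrom c M u x y z s \<omega>) (z s \<omega>))"
proof -
  have qg: "qfrom c M u x y z s \<omega> = gdiff c M x y z u s \<omega>" for s \<omega>
    by (simp add: qfrom_def gdiff_def Ch_def Dyh_def Dzh_def D0h_def matrix_vector_mult_add_rdistrib
        matrix_vector_mult_diff_distrib algebra_simps)
  have lx: "L2F M (Fnat M W) T x" and ly: "L2F M (Fnat M W) T y" using hx hy by (auto intro: L2FC_L2F)
  have lg: "L2F M (Fnat M W) T (\<lambda>s \<omega>. gdiff c M x y z u s \<omega>)"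
    unfolding gdiff_def by (intro L2F_add L2F_mvm_gb L2F_mexp gb_base gb_coefs lx ly hz hu)
  have qfun: "qfrom c M u x y z = gdiff c M x y z u" by (intro ext qg)
  have lq: "L2F M (Fnat M W) T (qfrom c M u x y z)" using lg unfolding qfun by simp
  have LY: "L2FC M (Fnat M W) T (\<lambda>s \<omega>. stack (x s \<omega>) (y s \<omega>))" by (rule L2FC_stack[OF hx hy])
  have LZ: "L2F M (Fnat M W) T (\<lambda>s \<omega>. stack (qfrom c M u x y z s \<omega>) (z s \<omega>))" by (rule L2F_stack[OF lq hz])
  have pu: "progressive M (Fnat M W) T u" and pz: "progressive M (Fnat M W) T z"
    and pq: "progressive M (Fnat M W) T (qfrom c M u x y z)"
    and px: "progressive M (Fnat M W) T x" and py: "progressive M (Fnat M W) T y"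
    and pY: "progressive M (Fnat M W) T (\<lambda>s \<omega>. stack (x s \<omega>) (y s \<omega>))"
    and pZ: "progressive M (Fnat M W) T (\<lambda>s \<omega>. stack (qfrom c M u x y z s \<omega>) (z s \<omega>))"
    using hu hz lq lx ly LY LZ by (auto simp: L2F_iff L2FC_def)
  from hm have sx: "sde M W T x (gdrift c M x y z u) (gdiff c M x y z u)"
    and sy: "sde M W T y (ydrift c M x y z) z"
    and tm: "AE \<omega> in M. y T \<omega> = cH c *v x T \<omega> + cHb c *v mexp M x T"
    unfolding mfgbcs_def by auto
  let ?Y = "\<lambda>s \<omega>. stack (x s \<omega>) (y s \<omega>)"
  let ?Z = "\<lambda>s \<omega>. stack (qfrom c M u x y z s \<omega>) (z s \<omega>)"
  let ?b = "\<lambda>s \<omega>. bA c s *v ?Y s \<omega> + bAb c s *v mexp M ?Y s + bC c s *v ?Z s \<omega>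
                      + bCb c s *v mexp M ?Z s + bB c s *v u s \<omega> + bBb c s *v mexp M u s"
  have bm: "(\<lambda>s. ?b s \<omega>) \<in> borel_measurable L" if \<omega>: "\<omega> \<in> space M" for \<omega>
  proof -
    note [measurable] = sec_s[OF pu \<omega>] sec_s[OF pz \<omega>] sec_s[OF pq \<omega>] sec_s[OF px \<omega>] sec_s[OF py \<omega>]
      mexp_meas[OF pY] mexp_meas[OF pZ] mexp_meas[OF pu]
    show ?thesis by measurable
  qed
  have ae: "AE s in lborel. s \<in> {0..T} \<longrightarrow> (\<forall>\<omega>\<in>space M. ?b s \<omega> = stack (gdrift c M x y z u s \<omega>) (ydrift c M x y z s \<omega>))"
    using L2F_int[OF hu] L2F_int[OF hz]
  proof eventually_elim
    case (elim s)
    show ?case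
    proof (intro impI ballI)
      fix \<omega> assume s: "s \<in> {0..T}" and \<omega>: "\<omega> \<in> space M"
      have iu: "integrable M (u s)" and iz: "integrable M (z s)" using elim s by auto
      have ix: "integrable M (x s)" and iy: "integrable M (y s)" using L2FC_int[OF hx s] L2FC_int[OF hy s] by auto
      have iq: "integrable M (qfrom c M u x y z s)"
        unfolding qfrom_def[abs_def] using ix iy iz iu by (simp add: int_simps)
      have mY: "mexp M ?Y s = stack (mexp M x s) (mexp M y s)"
        unfolding mexp_def using integral_stack[OF ix iy] by simp
      have mZ: "mexp M ?Z s = stack (mexp M (qfrom c M u x y z) s) (mexp M z s)"
        unfolding mexp_def using integral_stack[OF iq iz] by simp
      have mq: "mexp M (qfrom c M u x y z) s = Ch c s *v mexp M x s + Dyh c s *v mexp M y s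
          + Dzh c s *v mexp M z s + D0h c s *v mexp M u s"
        unfolding qfrom_def[abs_def] mexp_def[of M x] mexp_def[of M y] mexp_def[of M z] mexp_def[of M u]
        using ix iy iz iu by (simp add: int_simps mexp_def)
      have top: "vtop (?b s \<omega>) = gdrift c M x y z u s \<omega>"
        unfolding mY mZ gdrift_def
        by (rule alg_top1[where q="qfrom c M u x y z s \<omega>"]) (simp_all add: qfrom_def mq)
      have bot: "vbot (?b s \<omega>) = ydrift c M x y z s \<omega>"
        unfolding mY mZ ydrift_def by (rule alg_bot)
      show "?b s \<omega> = stack (gdrift c M x y z u s \<omega>) (ydrift c M x y z s \<omega>)"
        using stack_vtop_vbot[of "?b s \<omega>"] top bot by simp
    qed
  qed
  have "sde M W T ?Y ?b (\<lambda>s \<omega>. stack (gdiff c M x y z u s \<omega>) (z s \<omega>))"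
    by (rule sde_stack[OF sx sy bm ae])
  then have sd: "sde M W T ?Y ?b ?Z" by (simp add: qg)
  have tm': "AE \<omega> in M. vbot (?Y T \<omega>) = cH c *v vtop (?Y T \<omega>) + cHb c *v mexp M (\<lambda>s \<omega>. vtop (?Y s \<omega>)) T"
    using tm by simp
  show ?thesis using hu LY LZ sd tm' unfolding bwd_def by simp
qed


lemma mexp_split:
  fixes Y :: "real \<Rightarrow> 'a \<Rightarrow> real^('b::finite + 'd::finite)"
  assumes "integrable M (Y s)"
  shows "mexp M Y s = stack (mexp M (\<lambda>s \<omega>. vtop (Y s \<omega>)) s) (mexp M (\<lambda>s \<omega>. vbot (Y s \<omega>)) s)"
proof -
  have "mexp M Y s = (LINT \<omega>|M. stack (vtop (Y s \<omega>)) (vbot (Y s \<omega>)))"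
    unfolding mexp_def by (simp add: stack_vtop_vbot)
  also have "\<dots> = stack (mexp M (\<lambda>s \<omega>. vtop (Y s \<omega>)) s) (mexp M (\<lambda>s \<omega>. vbot (Y s \<omega>)) s)"
    unfolding mexp_def
    by (rule integral_stack[OF integrable_bounded_linear[OF bl_vtop(1) assms] integrable_bounded_linear[OF bl_vtop(2) assms]])
  finally show ?thesis .
qed

lemma part2:
  fixes v :: "real \<Rightarrow> 'a \<Rightarrow> real^'k" and Y Z :: "real \<Rightarrow> 'a \<Rightarrow> real^('n + ('p \<times> 'n))"
    and x q :: "real \<Rightarrow> 'a \<Rightarrow> real^'n" and y z :: "real \<Rightarrow> 'a \<Rightarrow> real^('p \<times> 'n)"
    and u :: "real \<Rightarrow> 'a \<Rightarrow> real^'k"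
  assumes hv: "L2F M (Fnat M W) T v" and hY: "L2FC M (Fnat M W) T Y" and hZ: "L2F M (Fnat M W) T Z"
    and hb: "bwd c M W T v Y Z"
    and xd: "x = (\<lambda>s \<omega>. vtop (Y s \<omega>))" and yd: "y = (\<lambda>s \<omega>. vbot (Y s \<omega>))"
    and qd: "q = (\<lambda>s \<omega>. vtop (Z s \<omega>))" and zd: "z = (\<lambda>s \<omega>. vbot (Z s \<omega>))"
    and ud: "u = ufrom c M v x y q z"
  shows "L2F M (Fnat M W) T u \<and> L2FC M (Fnat M W) T x \<and> L2FC M (Fnat M W) T y
            \<and> L2F M (Fnat M W) T z \<and> mfgbcs c M W T u x y z"
proof -
  have cx: "L2FC M (Fnat M W) T x" and cy: "L2FC M (Fnat M W) T y"
    unfolding xd yd by (rule L2FC_vtop[OF hY])+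
  have lq: "L2F M (Fnat M W) T q" and lz: "L2F M (Fnat M W) T z"
    unfolding qd zd by (rule L2F_vtop[OF hZ])+
  have lx: "L2F M (Fnat M W) T x" and ly: "L2F M (Fnat M W) T y" using cx cy by (auto intro: L2FC_L2F)
  have lu': "L2F M (Fnat M W) T (\<lambda>s \<omega>. ufrom c M v x y q z s \<omega>)"
    unfolding ufrom_def
    by (intro L2F_add L2F_diff L2F_mvm_gb L2F_mexp gb_G gb_base gb_coefs lx ly lz lq hv)
  have lu: "L2F M (Fnat M W) T u" using lu' unfolding ud by simp
  have pu: "progressive M (Fnat M W) T u" and pz: "progressive M (Fnat M W) T z"
    and pq: "progressive M (Fnat M W) T q" and pv: "progressive M (Fnat M W) T v"
    and px: "progressive M (Fnat M W) T x" and py: "progressive M (Fnat M W) T y"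
    using lu lz lq hv lx ly by (auto simp: L2F_iff)
  let ?b = "\<lambda>s \<omega>. bA c s *v Y s \<omega> + bAb c s *v mexp M Y s + bC c s *v Z s \<omega>
                      + bCb c s *v mexp M Z s + bB c s *v v s \<omega> + bBb c s *v mexp M v s"
  from hb have sY: "sde M W T Y ?b Z"
    and tm: "AE \<omega> in M. vbot (Y T \<omega>) = cH c *v vtop (Y T \<omega>) + cHb c *v mexp M (\<lambda>s \<omega>. vtop (Y s \<omega>)) T"
    unfolding bwd_def by auto
  obtain B where gd: "AE s in lborel. s \<in> {0..T} \<longrightarrow>
   cD0 c s ** transpose (cD0 c s) ** invDD c s = mat 1 \<and> D0h c s ** transpose (D0h c s) ** invDDh c s = mat 1 \<and>
   norm (invDD c s) \<le> B \<and> norm (invDDh c s) \<le> B" using good by blast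
  have key: "AE s in lborel. s \<in> {0..T} \<longrightarrow> (\<forall>\<omega>\<in>space M.
      gdrift c M x y z u s \<omega> = prj Inl (?b s \<omega>) \<and> gdiff c M x y z u s \<omega> = prj Inl (Z s \<omega>) \<and>
      ydrift c M x y z s \<omega> = prj Inr (?b s \<omega>))"
    using L2F_int[OF hv] L2F_int[OF hZ] gd
  proof eventually_elim
    case (elim s)
    show ?case
    proof (intro impI ballI)
      fix \<omega> assume s: "s \<in> {0..T}" and \<omega>: "\<omega> \<in> space M"
      have iv: "integrable M (v s)" and iZ: "integrable M (Z s)"
        and i1: "cD0 c s ** transpose (cD0 c s) ** invDD c s = mat 1"
        and i2: "D0h c s ** transpose (D0h c s) ** invDDh c s = mat 1" using elim s by auto
      have iY: "integrable M (Y s)" using L2FC_int[OF hY s] .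
      have ix: "integrable M (x s)" and iy: "integrable M (y s)"
        unfolding xd yd using integrable_bounded_linear[OF bl_vtop(1) iY] integrable_bounded_linear[OF bl_vtop(2) iY]
        by simp_all
      have iq: "integrable M (q s)" and iz: "integrable M (z s)"
        unfolding qd zd using integrable_bounded_linear[OF bl_vtop(1) iZ] integrable_bounded_linear[OF bl_vtop(2) iZ]
        by simp_all
      have mY: "mexp M Y s = stack (mexp M x s) (mexp M y s)" unfolding xd yd by (rule mexp_split[of Y s, OF iY])
      have mZ: "mexp M Z s = stack (mexp M q s) (mexp M z s)" unfolding qd zd by (rule mexp_split[of Z s, OF iZ])
      have Ys: "Y s \<omega> = stack (x s \<omega>) (y s \<omega>)" unfolding xd yd by (simp add: stack_vtop_vbot)
      have Zs: "Z s \<omega> = stack (q s \<omega>) (z s \<omega>)" unfolding qd zd by (simp add: stack_vtop_vbot)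
      have us: "u s \<omega> = ufrom c M v x y q z s \<omega>" unfolding ud ..
      have mu: "mexp M u s = (transpose (D0h c s) ** invDDh c s) *v (mexp M q s - Ch c s *v mexp M x s
          - Dyh c s *v mexp M y s - Dzh c s *v mexp M z s)
        + (mat 1 - transpose (D0h c s) ** invDDh c s ** D0h c s) *v mexp M v s"
        unfolding ud ufrom_def[abs_def] mexp_def[of M u]
        using ix iy iz iq iv by (simp add: int_simps mexp_def)
      have b: "?b s \<omega> = bA c s *v stack (x s \<omega>) (y s \<omega>) + bAb c s *v stack (mexp M x s) (mexp M y s)
          + bC c s *v stack (q s \<omega>) (z s \<omega>) + bCb c s *v stack (mexp M q s) (mexp M z s)
          + bB c s *v v s \<omega> + bBb c s *v mexp M v s"
        by (simp only: Ys Zs mY mZ)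
      have g1: "gdrift c M x y z u s \<omega> = vtop (?b s \<omega>)"
        unfolding b gdrift_def
        by (rule alg_top2) (simp_all only: us ufrom_def mu)
      have g2: "gdiff c M x y z u s \<omega> = vtop (Z s \<omega>)"
        unfolding gdiff_def Zs vtop_stack
        by (rule alg_diff2[OF _ _ i1 i2]) (simp_all only: us ufrom_def mu)
      have g3: "ydrift c M x y z s \<omega> = vbot (?b s \<omega>)"
        unfolding b ydrift_def by (rule alg_bot[symmetric])
      show "gdrift c M x y z u s \<omega> = prj Inl (?b s \<omega>) \<and> gdiff c M x y z u s \<omega> = prj Inl (Z s \<omega>) \<and>
          ydrift c M x y z s \<omega> = prj Inr (?b s \<omega>)"
        using g1 g2 g3 by (simp add: vtop_prj vbot_prj)
    qed
  qed
  have sx: "sde M W T x (gdrift c M x y z u) (gdiff c M x y z u)"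
  proof (rule sde_prj[OF sY, where g=Inl])
    fix \<omega> assume \<omega>: "\<omega> \<in> space M"
    note [measurable] = sec_s[OF pu \<omega>] sec_s[OF pz \<omega>] sec_s[OF px \<omega>] sec_s[OF py \<omega>]
      mexp_meas[OF px] mexp_meas[OF py] mexp_meas[OF pz] mexp_meas[OF pu]
    show "(\<lambda>s. gdrift c M x y z u s \<omega>) \<in> borel_measurable L" unfolding gdrift_def by measurable
  next
    show "AE s in lborel. s \<in> {0..T} \<longrightarrow> (\<forall>\<omega>\<in>space M. gdrift c M x y z u s \<omega> = prj Inl (?b s \<omega>))"
      using key by eventually_elim blast
    show "AE s in lborel. s \<in> {0..T} \<longrightarrow> (\<forall>\<omega>\<in>space M. gdiff c M x y z u s \<omega> = prj Inl (Z s \<omega>))"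
      using key by eventually_elim blast
    show "\<And>s \<omega>. x s \<omega> = prj Inl (Y s \<omega>)" unfolding xd by (simp add: vtop_prj)
  qed
  have sy: "sde M W T y (ydrift c M x y z) z"
  proof (rule sde_prj[OF sY, where g=Inr])
    fix \<omega> assume \<omega>: "\<omega> \<in> space M"
    note [measurable] = sec_s[OF pz \<omega>] sec_s[OF px \<omega>] sec_s[OF py \<omega>]
      mexp_meas[OF px] mexp_meas[OF py] mexp_meas[OF pz]
    show "(\<lambda>s. ydrift c M x y z s \<omega>) \<in> borel_measurable L" unfolding ydrift_def by measurable
  next
    show "AE s in lborel. s \<in> {0..T} \<longrightarrow> (\<forall>\<omega>\<in>space M. ydrift c M x y z s \<omega> = prj Inr (?b s \<omega>))"
      using key by eventually_elim blast
    show "AE s in lborel. s \<in> {0..T} \<longrightarrow> (\<forall>\<omega>\<in>space M. z s \<omega> = prj Inr (Z s \<omega>))"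
      unfolding zd by (simp add: vbot_prj)
    show "\<And>s \<omega>. y s \<omega> = prj Inr (Y s \<omega>)" unfolding yd by (simp add: vbot_prj)
  qed
  have tm': "AE \<omega> in M. y T \<omega> = cH c *v x T \<omega> + cHb c *v mexp M x T"
    using tm unfolding xd yd by simp
  show ?thesis using lu cx cy lz sx sy tm' unfolding mfgbcs_def by simp
qed

end

theorem theorem3p3:
  fixes c :: "('n::finite, 'k::finite, 'm::finite, 'p::finite) coef"
    and M :: "'a measure" and W :: "real \<Rightarrow> 'a \<Rightarrow> real" and T :: real
  assumes "T > 0"
    and "brownian M W"
    and "complete_measure M"
    and "coef_ok c T"
    and "\<forall>s\<in>{0..T}. invertible (cR c s) \<and> invertible (cR c s + cRb c s)"
    and "bounded ((\<lambda>s. matrix_inv (cR c s)) ` {0..T})"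
    and "bounded ((\<lambda>s. matrix_inv (cR c s + cRb c s)) ` {0..T})"
    and "\<exists>\<delta>>0. AE s in lborel. s \<in> {0..T} \<longrightarrow>
           (\<forall>\<xi>. \<delta> * (\<xi> \<bullet> \<xi>) \<le> \<xi> \<bullet> ((cD0 c s ** transpose (cD0 c s)) *v \<xi>)) \<and>
           (\<forall>\<xi>. \<delta> * (\<xi> \<bullet> \<xi>) \<le> \<xi> \<bullet> ((D0h c s ** transpose (D0h c s)) *v \<xi>))"
  shows
    "(\<forall>(u :: real \<Rightarrow> 'a \<Rightarrow> real^'k) (x :: real \<Rightarrow> 'a \<Rightarrow> real^'n)
        (y :: real \<Rightarrow> 'a \<Rightarrow> real^('p \<times> 'n)) (z :: real \<Rightarrow> 'a \<Rightarrow> real^('p \<times> 'n)).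
        L2F M (Fnat M W) T u \<and> L2FC M (Fnat M W) T x \<and> L2FC M (Fnat M W) T y
        \<and> L2F M (Fnat M W) T z \<and> mfgbcs c M W T u x y z \<longrightarrow>
        (let q = qfrom c M u x y z; v = u;
             Y = (\<lambda>s \<omega>. stack (x s \<omega>) (y s \<omega>));
             Z = (\<lambda>s \<omega>. stack (q s \<omega>) (z s \<omega>))
         in L2F M (Fnat M W) T v \<and> L2FC M (Fnat M W) T Y \<and> L2F M (Fnat M W) T Z
            \<and> bwd c M W T v Y Z))
   \<and>
     (\<forall>(v :: real \<Rightarrow> 'a \<Rightarrow> real^'k) (Y :: real \<Rightarrow> 'a \<Rightarrow> real^('n + ('p \<times> 'n)))
        (Z :: real \<Rightarrow> 'a \<Rightarrow> real^('n + ('p \<times> 'n))).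
        L2F M (Fnat M W) T v \<and> L2FC M (Fnat M W) T Y \<and> L2F M (Fnat M W) T Z
        \<and> bwd c M W T v Y Z \<longrightarrow>
        (let x = (\<lambda>s \<omega>. vtop (Y s \<omega>)); y = (\<lambda>s \<omega>. vbot (Y s \<omega>));
             q = (\<lambda>s \<omega>. vtop (Z s \<omega>)); z = (\<lambda>s \<omega>. vbot (Z s \<omega>));
             u = ufrom c M v x y q z
         in L2F M (Fnat M W) T u \<and> L2FC M (Fnat M W) T x \<and> L2FC M (Fnat M W) T y
            \<and> L2F M (Fnat M W) T z \<and> mfgbcs c M W T u x y z))"
proof -
  interpret ctx M W T c
    using assms by unfold_locales auto
  show ?thesis
  proof (intro conjI allI impI)
    fix u :: "real \<Rightarrow> 'a \<Rightarrow> real^'k" and x :: "real \<Rightarrow> 'a \<Rightarrow> real^'n"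
      and y z :: "real \<Rightarrow> 'a \<Rightarrow> real^('p \<times> 'n)"
    assume h: "L2F M (Fnat M W) T u \<and> L2FC M (Fnat M W) T x \<and> L2FC M (Fnat M W) T y
        \<and> L2F M (Fnat M W) T z \<and> mfgbcs c M W T u x y z"
    then show "let q = qfrom c M u x y z; v = u;
             Y = (\<lambda>s \<omega>. stack (x s \<omega>) (y s \<omega>));
             Z = (\<lambda>s \<omega>. stack (q s \<omega>) (z s \<omega>))
         in L2F M (Fnat M W) T v \<and> L2FC M (Fnat M W) T Y \<and> L2F M (Fnat M W) T Z
            \<and> bwd c M W T v Y Z"
      unfolding Let_def using part1 by blast
  next
    fix v :: "real \<Rightarrow> 'a \<Rightarrow> real^'k" and Y Z :: "real \<Rightarrow> 'a \<Rightarrow> real^('n + ('p \<times> 'n))"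
    assume h: "L2F M (Fnat M W) T v \<and> L2FC M (Fnat M W) T Y \<and> L2F M (Fnat M W) T Z
        \<and> bwd c M W T v Y Z"
    then show "let x = (\<lambda>s \<omega>. vtop (Y s \<omega>)); y = (\<lambda>s \<omega>. vbot (Y s \<omega>));
             q = (\<lambda>s \<omega>. vtop (Z s \<omega>)); z = (\<lambda>s \<omega>. vbot (Z s \<omega>));
             u = ufrom c M v x y q z
         in L2F M (Fnat M W) T u \<and> L2FC M (Fnat M W) T x \<and> L2FC M (Fnat M W) T y
            \<and> L2F M (Fnat M W) T z \<and> mfgbcs c M W T u x y z"
      unfolding Let_def using part2[OF _ _ _ _ refl refl refl refl refl] by blast
  qed
qed

end
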